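(* Let $(\mathbb{K}_{LC}\langle\langle X\rangle\rangle)^\times$ denote the set of invertible elements of the algebra $(\mathbb{K}_{LC}\langle\langle X\rangle\rangle,\sqcup\!\sqcup)$. The shuffle inverse $$(\mathbb{K}_{LC}\langle\langle X\rangle\rangle)^\times\to(\mathbb{K}_{LC}\langle\langle X\rangle\rangle)^\times,\quad c\mapsto (c,\emptyset)^{-1}\sum_{k\geq 0}(c')^{\sqcup\!\sqcup\, k},\qquad c'=\mathbf{1}-c/(c,\emptyset),$$ is well defined and continuous with respect to the Silva topology.
   Context: $\mathbb{K}\in\{\mathbb{R},\mathbb{C}\}$. $X=\{x_0,\ldots,x_m\}$ is a finite alphabet, $X^\ast$ its set of words (including the empty word $\emptyset$). For $M>0$, $\|c\|_{\ell_\infty,M}=\sup_\eta|(c,\eta)|/(M^{|\eta|}|\eta|!)$ on series $c\colon X^\ast\to\mathbb{K}$, and $\ell_{\infty,M}(X^\ast,\mathbb{K})$ is the Banach space of series with finite norm. $\mathbb{K}_{LC}\langle\langle X\rangle\rangle=\bigcup_{M>0}\ell_{\infty,M}(X^\ast,\mathbb{K})$ with the Silva topology, i.e. the locally convex inductive limit topology of these Banach spaces. $\mathbf{1}$ denotes the series $1\cdot\emptyset$. The shuffle product is the bilinear product determined on words by $(x_i\eta)\sqcup\!\sqcup(x_j\xi)=x_i(\eta\sqcup\!\sqcup(x_j\xi))+x_j((x_i\eta)\sqcup\!\sqcup\xi)$, $\eta\sqcup\!\sqcup\emptyset=\emptyset\sqcup\!\sqcup\eta=\eta$, extended bilinearly;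 its unit is $\mathbf{1}$, and the invertible elements are exactly the series with $(c,\emptyset)\neq0$. $(c')^{\sqcup\!\sqcup k}$ is the $k$-fold shuffle power. *)

theory Defs
  imports "HOL-Analysis.Analysis"
begin

text \<open>Words over a finite alphabet: lists over a type of class finite.
  Series: functions from words to the scalar field.\<close>

definition one_ser :: "'a list \<Rightarrow> 'k::real_normed_field" where
  "one_ser \<eta> = (if \<eta> = [] then 1 else 0)"

definition shuffle :: "('a list \<Rightarrow> 'k::real_normed_field) \<Rightarrow> ('a list \<Rightarrow> 'k) \<Rightarrow> 'a list \<Rightarrow> 'k" where
  "shuffle c d \<eta> =
     (\<Sum>S\<in>Pow {..<length \<eta>}. c (nths \<eta> S) * d (nths \<eta> ({..<length \<eta>} - S)))"

fun shuffle_pow :: "('a list \<Rightarrow> 'k::real_normed_field) \<Rightarrow> nat \<Rightarrow> 'a list \<Rightarrow> 'k" where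
  "shuffle_pow c 0 = one_ser"
| "shuffle_pow c (Suc k) = shuffle c (shuffle_pow c k)"

definition ell_norm :: "real \<Rightarrow> ('a list \<Rightarrow> 'k::real_normed_field) \<Rightarrow> real" where
  "ell_norm M c = (SUP \<eta>. norm (c \<eta>) / (M ^ length \<eta> * fact (length \<eta>)))"

definition ell_inf :: "real \<Rightarrow> ('a list \<Rightarrow> 'k::real_normed_field) set" where
  "ell_inf M = {c. bdd_above (range (\<lambda>\<eta>. norm (c \<eta>) / (M ^ length \<eta> * fact (length \<eta>))))}"

definition LC :: "('a list \<Rightarrow> 'k::real_normed_field) set" where
  "LC = (\<Union>M\<in>{0<..}. ell_inf M)"

definition LC_units :: "('a list \<Rightarrow> 'k::real_normed_field) set" where
  "LC_units = {c \<in> LC. c [] \<noteq> 0}"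

definition absconvex :: "('a list \<Rightarrow> 'k::real_normed_field) set \<Rightarrow> bool" where
  "absconvex U \<longleftrightarrow> (\<forall>x\<in>U. \<forall>y\<in>U. \<forall>a b::'k. norm a + norm b \<le> 1 \<longrightarrow>
        (\<lambda>\<eta>. a * x \<eta> + b * y \<eta>) \<in> U)"

text \<open>Basic zero neighbourhoods of the locally convex inductive limit topology:
  absolutely convex subsets of LC whose trace on each step space ell_inf M
  is a zero neighbourhood of that Banach space.\<close>
definition silva_zero_nbhd :: "('a list \<Rightarrow> 'k::real_normed_field) set \<Rightarrow> bool" where
  "silva_zero_nbhd U \<longleftrightarrow> U \<subseteq> LC \<and> absconvex U \<and>
     (\<forall>M>0. \<exists>\<epsilon>>0. {c \<in> ell_inf M. ell_norm M c < \<epsilon>} \<subseteq> U)"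

definition silva_open :: "('a list \<Rightarrow> 'k::real_normed_field) set \<Rightarrow> bool" where
  "silva_open V \<longleftrightarrow> V \<subseteq> LC \<and>
     (\<forall>c\<in>V. \<exists>U. silva_zero_nbhd U \<and> (\<lambda>u \<eta>. c \<eta> + u \<eta>) ` U \<subseteq> V)"

definition silva_topology :: "('a list \<Rightarrow> 'k::real_normed_field) topology" where
  "silva_topology = topology silva_open"

definition cprime :: "('a list \<Rightarrow> 'k::real_normed_field) \<Rightarrow> 'a list \<Rightarrow> 'k" where
  "cprime c = (\<lambda>\<eta>. one_ser \<eta> - c \<eta> / c [])"

text \<open>Coefficientwise value of the series sum_k (c')^k (finite for each word since
  c' has zero constant term), scaled by the inverse of the constant term.\<close>
definition shuffle_inv :: "('a list \<Rightarrow> 'k::real_normed_field) \<Rightarrow> 'a list \<Rightarrow> 'k" where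
  "shuffle_inv c = (\<lambda>\<eta>. inverse (c []) * (\<Sum>k\<le>length \<eta>. shuffle_pow (cprime c) k \<eta>))"

end

theory Submission
  imports Defs "HOL-Computational_Algebra.Formal_Power_Series"
begin


lemma wpos: "(0::real) < M \<Longrightarrow> 0 < M ^ n * fact n"
  by simp

lemma ell_inf_iff:
  assumes "(0::real) < M"
  shows "c \<in> ell_inf M \<longleftrightarrow> (\<exists>K. \<forall>\<eta>. norm (c \<eta>) \<le> K * (M ^ length \<eta> * fact (length \<eta>)))"
proof
  assume "c \<in> ell_inf M"
  then obtain K where K: "\<And>\<eta>. norm (c \<eta>) / (M ^ length \<eta> * fact (length \<eta>)) \<le> K"
    unfolding ell_inf_def bdd_above_def by auto
  show "\<exists>K. \<forall>\<eta>. norm (c \<eta>) \<le> K * (M ^ length \<eta> * fact (length \<eta>))"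
    using K wpos[OF assms] by (metis pos_divide_le_eq)
next
  assume "\<exists>K. \<forall>\<eta>. norm (c \<eta>) \<le> K * (M ^ length \<eta> * fact (length \<eta>))"
  then obtain K where K: "\<And>\<eta>. norm (c \<eta>) \<le> K * (M ^ length \<eta> * fact (length \<eta>))" by auto
  have "\<And>\<eta>. norm (c \<eta>) / (M ^ length \<eta> * fact (length \<eta>)) \<le> K"
    using K wpos[OF assms] by (metis pos_divide_le_eq)
  then show "c \<in> ell_inf M" unfolding ell_inf_def bdd_above_def by auto
qed

lemma LC_iff: "c \<in> LC \<longleftrightarrow> (\<exists>M>0. \<exists>K. \<forall>\<eta>. norm (c \<eta>) \<le> K * (M ^ length \<eta> * fact (length \<eta>)))"
  unfolding LC_def using ell_inf_iff by auto

lemma ell_norm_le: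
  assumes "(0::real) < M" "\<And>\<eta>. norm (c \<eta>) \<le> b * (M ^ length \<eta> * fact (length \<eta>))"
  shows "ell_norm M c \<le> b"
  unfolding ell_norm_def
proof (rule cSUP_least)
  fix \<eta> show "norm (c \<eta>) / (M ^ length \<eta> * fact (length \<eta>)) \<le> b"
    using assms wpos[OF assms(1)] by (metis pos_divide_le_eq)
qed simp

lemma ell_norm_ge:
  assumes "c \<in> ell_inf M"
  shows "norm (c \<eta>) / (M ^ length \<eta> * fact (length \<eta>)) \<le> ell_norm M c"
  using assms unfolding ell_norm_def ell_inf_def by (auto intro: cSUP_upper)

lemma LC_lin:
  assumes "x \<in> LC" "y \<in> LC"
  shows "(\<lambda>\<eta>. a * x \<eta> + b * y \<eta>) \<in> LC"
proof -
  obtain M1 K1 where M1: "M1 > 0" "\<And>\<eta>. norm (x \<eta>) \<le> K1 * (M1 ^ length \<eta> * fact (length \<eta>))"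
    using assms(1) unfolding LC_iff by auto
  obtain M2 K2 where M2: "M2 > 0" "\<And>\<eta>. norm (y \<eta>) \<le> K2 * (M2 ^ length \<eta> * fact (length \<eta>))"
    using assms(2) unfolding LC_iff by auto
  define M where "M = max M1 M2"
  have "M > 0" using M1 M2 by (simp add: M_def)
  have "norm (a * x \<eta> + b * y \<eta>) \<le> (norm a * \<bar>K1\<bar> + norm b * \<bar>K2\<bar>) * (M ^ length \<eta> * fact (length \<eta>))" for \<eta>
  proof -
    let ?n = "length \<eta>"
    have p1: "M1 ^ ?n \<le> M ^ ?n" using M1 by (simp add: M_def power_mono)
    have p2: "M2 ^ ?n \<le> M ^ ?n" using M2 by (simp add: M_def power_mono)
    have "norm (x \<eta>) \<le> \<bar>K1\<bar> * (M ^ ?n * fact ?n)"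
    proof -
      have "norm (x \<eta>) \<le> K1 * (M1 ^ ?n * fact ?n)" by (rule M1(2))
      also have "\<dots> \<le> \<bar>K1\<bar> * (M1 ^ ?n * fact ?n)" using M1 by (intro mult_right_mono) auto
      also have "\<dots> \<le> \<bar>K1\<bar> * (M ^ ?n * fact ?n)" using p1 by (intro mult_left_mono mult_right_mono) auto
      finally show ?thesis .
    qed
    moreover have "norm (y \<eta>) \<le> \<bar>K2\<bar> * (M ^ ?n * fact ?n)"
    proof -
      have "norm (y \<eta>) \<le> K2 * (M2 ^ ?n * fact ?n)" by (rule M2(2))
      also have "\<dots> \<le> \<bar>K2\<bar> * (M2 ^ ?n * fact ?n)" using M2 by (intro mult_right_mono) auto
      also have "\<dots> \<le> \<bar>K2\<bar> * (M ^ ?n * fact ?n)" using p2 by (intro mult_left_mono mult_right_mono) auto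
      finally show ?thesis .
    qed
    ultimately have "norm a * norm (x \<eta>) + norm b * norm (y \<eta>) \<le> norm a * (\<bar>K1\<bar> * (M ^ ?n * fact ?n)) + norm b * (\<bar>K2\<bar> * (M ^ ?n * fact ?n))"
      by (intro add_mono mult_left_mono) auto
    moreover have "norm (a * x \<eta> + b * y \<eta>) \<le> norm a * norm (x \<eta>) + norm b * norm (y \<eta>)"
      by (metis norm_mult norm_triangle_ineq)
    ultimately show ?thesis by (simp add: algebra_simps)
  qed
  then show ?thesis unfolding LC_iff using \<open>M > 0\<close> by blast
qed

lemma LC_add: "x \<in> LC \<Longrightarrow> y \<in> LC \<Longrightarrow> (\<lambda>\<eta>. x \<eta> + y \<eta>) \<in> LC"
  using LC_lin[of x y 1 1] by simp
lemma LC_diff: "x \<in> LC \<Longrightarrow> y \<in> LC \<Longrightarrow> (\<lambda>\<eta>. x \<eta> - y \<eta>) \<in> LC"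
  using LC_lin[of x y 1 "-1"] by simp
lemma LC_scale: "x \<in> LC \<Longrightarrow> (\<lambda>\<eta>. a * x \<eta>) \<in> LC"
  using LC_lin[of x x a 0] by simp

lemma absconvex_LC: "absconvex LC"
  unfolding absconvex_def using LC_lin by blast

lemma zero_nbhd_LC: "silva_zero_nbhd LC"
  unfolding silva_zero_nbhd_def using absconvex_LC
  by (auto simp: LC_def intro!: exI[of _ 1])

lemma zero_nbhd_Int:
  assumes "silva_zero_nbhd U" "silva_zero_nbhd V"
  shows "silva_zero_nbhd (U \<inter> V)"
proof -
  have "absconvex (U \<inter> V)" using assms unfolding silva_zero_nbhd_def absconvex_def by blast
  moreover have "\<exists>\<epsilon>>0. {c \<in> ell_inf M. ell_norm M c < \<epsilon>} \<subseteq> U \<inter> V" if M0: "M > 0" for M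
  proof -
    obtain e1 where "e1 > 0" "{c \<in> ell_inf M. ell_norm M c < e1} \<subseteq> U"
      using assms(1) M0 unfolding silva_zero_nbhd_def by blast
    moreover obtain e2 where "e2 > 0" "{c \<in> ell_inf M. ell_norm M c < e2} \<subseteq> V"
      using assms(2) M0 unfolding silva_zero_nbhd_def by blast
    ultimately show ?thesis by (intro exI[of _ "min e1 e2"]) auto
  qed
  ultimately show ?thesis using assms unfolding silva_zero_nbhd_def by blast
qed

lemma istopology_silva: "istopology (silva_open :: ('a list \<Rightarrow> 'k::real_normed_field) set \<Rightarrow> bool)"
  unfolding istopology_def
proof (intro conjI allI impI)
  fix S T :: "('a list \<Rightarrow> 'k) set"
  assume S: "silva_open S" and T: "silva_open T"
  show "silva_open (S \<inter> T)"
    unfolding silva_open_def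
  proof (intro conjI ballI)
    show "S \<inter> T \<subseteq> LC" using S unfolding silva_open_def by auto
    fix c assume "c \<in> S \<inter> T"
    then obtain U V where "silva_zero_nbhd U" "(\<lambda>u \<eta>. c \<eta> + u \<eta>) ` U \<subseteq> S"
        "silva_zero_nbhd V" "(\<lambda>u \<eta>. c \<eta> + u \<eta>) ` V \<subseteq> T"
      using S T unfolding silva_open_def by blast
    then show "\<exists>U. silva_zero_nbhd U \<and> (\<lambda>u \<eta>. c \<eta> + u \<eta>) ` U \<subseteq> S \<inter> T"
      by (intro exI[of _ "U \<inter> V"]) (auto intro: zero_nbhd_Int)
  qed
next
  fix K :: "('a list \<Rightarrow> 'k) set set"
  assume "\<forall>K\<in>K. silva_open K"
  then have K: "\<And>S. S \<in> K \<Longrightarrow> S \<subseteq> LC \<and> (\<forall>c\<in>S. \<exists>U. silva_zero_nbhd U \<and> (\<lambda>u \<eta>. c \<eta> + u \<eta>) ` U \<subseteq> S)"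
    unfolding silva_open_def by blast
  show "silva_open (\<Union>K)" unfolding silva_open_def
  proof (intro conjI ballI)
    show "\<Union>K \<subseteq> LC" using K by blast
    fix c assume "c \<in> \<Union>K"
    then obtain S where "S \<in> K" "c \<in> S" by blast
    then obtain U where "silva_zero_nbhd U" "(\<lambda>u \<eta>. c \<eta> + u \<eta>) ` U \<subseteq> S" using K by blast
    then show "\<exists>U. silva_zero_nbhd U \<and> (\<lambda>u \<eta>. c \<eta> + u \<eta>) ` U \<subseteq> \<Union>K"
      using \<open>S \<in> K\<close> by blast
  qed
qed

lemma openin_silva: "openin (silva_topology :: ('a list \<Rightarrow> 'k::real_normed_field) topology) = silva_open"
  unfolding silva_topology_def by (rule topology_inverse'[OF istopology_silva])

lemma silva_open_LC: "silva_open (LC :: ('a list \<Rightarrow> 'k::real_normed_field) set)"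
  unfolding silva_open_def
proof (intro conjI ballI)
  fix c :: "'a list \<Rightarrow> 'k::real_normed_field" assume "c \<in> LC"
  then show "\<exists>U. silva_zero_nbhd U \<and> (\<lambda>u \<eta>. c \<eta> + u \<eta>) ` U \<subseteq> LC"
    using zero_nbhd_LC LC_add by (intro exI[of _ LC]) blast
qed simp

lemma topspace_silva: "topspace (silva_topology :: ('a list \<Rightarrow> 'k::real_normed_field) topology) = LC"
proof -
  have "\<Union>{S. silva_open S} = (LC :: ('a list \<Rightarrow> 'k) set)"
  proof
    show "\<Union>{S. silva_open S} \<subseteq> (LC :: ('a list \<Rightarrow> 'k) set)" unfolding silva_open_def by blast
    show "(LC :: ('a list \<Rightarrow> 'k) set) \<subseteq> \<Union>{S. silva_open S}" using silva_open_LC by blast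
  qed
  then show ?thesis unfolding topspace_def openin_silva by simp
qed

lemma weight_nbhd:
  fixes s :: "nat \<Rightarrow> real"
  assumes "\<And>L. L > 0 \<Longrightarrow> \<exists>r>0. \<forall>n. r * L ^ n \<le> s n"
  shows "silva_zero_nbhd {w :: 'a list \<Rightarrow> 'k::real_normed_field. w \<in> LC \<and> (\<forall>\<eta>. norm (w \<eta>) \<le> fact (length \<eta>) * s (length \<eta>))}"
  unfolding silva_zero_nbhd_def
proof (intro conjI allI impI)
  show "absconvex {w :: 'a list \<Rightarrow> 'k. w \<in> LC \<and> (\<forall>\<eta>. norm (w \<eta>) \<le> fact (length \<eta>) * s (length \<eta>))}"
    unfolding absconvex_def
  proof (intro ballI allI impI, simp only: mem_Collect_eq, intro conjI allI)
    fix x y :: "'a list \<Rightarrow> 'k" and a b :: 'k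
    assume x: "x \<in> LC \<and> (\<forall>\<eta>. norm (x \<eta>) \<le> fact (length \<eta>) * s (length \<eta>))"
      and y: "y \<in> LC \<and> (\<forall>\<eta>. norm (y \<eta>) \<le> fact (length \<eta>) * s (length \<eta>))"
      and ab: "norm a + norm b \<le> 1"
    show "(\<lambda>\<eta>. a * x \<eta> + b * y \<eta>) \<in> LC" using x y LC_lin by blast
    fix \<eta> :: "'a list"
    let ?N = "fact (length \<eta>) * s (length \<eta>)"
    have "norm (a * x \<eta> + b * y \<eta>) \<le> norm a * norm (x \<eta>) + norm b * norm (y \<eta>)"
      by (metis norm_mult norm_triangle_ineq)
    also have "\<dots> \<le> norm a * ?N + norm b * ?N"
      using x y by (intro add_mono mult_left_mono) auto
    also have "\<dots> = (norm a + norm b) * ?N" by (simp add: algebra_simps)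
    also have "\<dots> \<le> 1 * ?N"
      using ab x by (intro mult_right_mono) (auto intro: order_trans[OF norm_ge_zero])
    finally show "norm (a * x \<eta> + b * y \<eta>) \<le> ?N" by simp
  qed
next
  fix M :: real assume "M > 0"
  then obtain r where r: "r > 0" "\<And>n. r * M ^ n \<le> s n" using assms by blast
  show "\<exists>\<epsilon>>0. {c \<in> ell_inf M. ell_norm M c < \<epsilon>} \<subseteq> {w :: 'a list \<Rightarrow> 'k. w \<in> LC \<and> (\<forall>\<eta>. norm (w \<eta>) \<le> fact (length \<eta>) * s (length \<eta>))}"
  proof (intro exI[of _ r] conjI subsetI)
    fix c :: "'a list \<Rightarrow> 'k" assume c: "c \<in> {c \<in> ell_inf M. ell_norm M c < r}"
    have "c \<in> LC" using c \<open>M > 0\<close> unfolding LC_def by auto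
    moreover have "norm (c \<eta>) \<le> fact (length \<eta>) * s (length \<eta>)" for \<eta>
    proof -
      have "norm (c \<eta>) / (M ^ length \<eta> * fact (length \<eta>)) < r"
        using ell_norm_ge[of c M \<eta>] c by auto
      then have "norm (c \<eta>) \<le> r * (M ^ length \<eta> * fact (length \<eta>))"
        using wpos[OF \<open>M > 0\<close>] by (simp add: divide_less_eq less_imp_le)
      also have "\<dots> \<le> fact (length \<eta>) * s (length \<eta>)"
        using r(2)[of "length \<eta>"] by (simp add: algebra_simps mult_right_mono)
      finally show ?thesis .
    qed
    ultimately show "c \<in> {w. w \<in> LC \<and> (\<forall>\<eta>. norm (w \<eta>) \<le> fact (length \<eta>) * s (length \<eta>))}" by blast
  qed (use r in auto)
qed auto




definition Rh :: "(nat \<Rightarrow> real) \<Rightarrow> nat \<Rightarrow> real" where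
  "Rh e n = Max ((\<lambda>m. e m * (real m / 2) ^ n) ` {1..n+1})"

definition Vw :: "(nat \<Rightarrow> real) \<Rightarrow> nat \<Rightarrow> real" where
  "Vw e n = Rh e n / (real n + 1) ^ 2"

lemma Rh_attained: "\<exists>m\<in>{1..n+1}. Rh e n = e m * (real m / 2) ^ n"
proof -
  have "Rh e n \<in> (\<lambda>m. e m * (real m / 2) ^ n) ` {1..n+1}"
    unfolding Rh_def by (rule Max_in) auto
  then show ?thesis by auto
qed

lemma Rh_ge: "m \<in> {1..n+1} \<Longrightarrow> e m * (real m / 2) ^ n \<le> Rh e n"
  unfolding Rh_def by (rule Max_ge) auto

locale wseq =
  fixes e :: "nat \<Rightarrow> real"
  assumes epos: "\<And>m. 1 \<le> m \<Longrightarrow> 0 < e m"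
    and emono: "\<And>m m'. 1 \<le> m \<Longrightarrow> m \<le> m' \<Longrightarrow> e m' \<le> e m"
begin

lemma Rh_pos: "0 < Rh e n"
proof -
  have "0 < e 1 * (real 1 / 2) ^ n" using epos[of 1] by simp
  also have "\<dots> \<le> Rh e n" by (rule Rh_ge) auto
  finally show ?thesis .
qed

lemma Vw_pos: "0 < Vw e n"
  unfolding Vw_def using Rh_pos by simp

lemma Vw_le_Rh: "Vw e n \<le> Rh e n"
proof -
  have "1 \<le> (real n + 1) ^ 2" by simp
  then show ?thesis unfolding Vw_def using Rh_pos[of n]
    by (simp add: divide_le_eq mult_le_cancel_left1 less_imp_le)
qed

lemma Rh_prod: "Rh e j * Rh e k \<le> e 1 * Rh e (j + k)"
proof -
  obtain m where m: "m \<in> {1..j+1}" "Rh e j = e m * (real m / 2) ^ j" using Rh_attained by blast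
  obtain m' where m': "m' \<in> {1..k+1}" "Rh e k = e m' * (real m' / 2) ^ k" using Rh_attained by blast
  have em: "0 < e m" "0 < e m'" using m m' epos by auto
  show ?thesis
  proof (cases "m' \<le> m")
    case True
    have "Rh e j * Rh e k = e m * e m' * ((real m / 2) ^ j * (real m' / 2) ^ k)"
      using m m' by (simp add: algebra_simps)
    also have "\<dots> \<le> e m * e 1 * ((real m / 2) ^ j * (real m / 2) ^ k)"
    proof (intro mult_mono mult_left_mono power_mono)
      show "e m' \<le> e 1" using emono[of 1 m'] m' by auto
      show "real m' / 2 \<le> real m / 2" using True by simp
    qed (use em epos[of 1] in auto)
    also have "\<dots> = e 1 * (e m * (real m / 2) ^ (j + k))" by (simp add: power_add algebra_simps)
    also have "\<dots> \<le> e 1 * Rh e (j + k)"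
      using m epos[of 1] by (intro mult_left_mono Rh_ge) auto
    finally show ?thesis .
  next
    case False
    have "Rh e j * Rh e k = e m' * e m * ((real m / 2) ^ j * (real m' / 2) ^ k)"
      using m m' by (simp add: algebra_simps)
    also have "\<dots> \<le> e m' * e 1 * ((real m' / 2) ^ j * (real m' / 2) ^ k)"
    proof (intro mult_mono mult_left_mono power_mono)
      show "e m \<le> e 1" using emono[of 1 m] m by auto
      show "real m / 2 \<le> real m' / 2" using False by simp
    qed (use em epos[of 1] in auto)
    also have "\<dots> = e 1 * (e m' * (real m' / 2) ^ (j + k))" by (simp add: power_add algebra_simps)
    also have "\<dots> \<le> e 1 * Rh e (j + k)"
      using m m' False epos[of 1] by (intro mult_left_mono Rh_ge) auto
    finally show ?thesis .
  qed
qed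

end

lemma sum_inv_sq: "(\<Sum>i=0..n. 1 / (real i + 1) ^ 2) \<le> 2 - 1 / (real n + 1)"
proof (induction n)
  case 0 then show ?case by simp
next
  case (Suc n)
  have "(\<Sum>i=0..Suc n. 1 / (real i + 1) ^ 2) = (\<Sum>i=0..n. 1 / (real i + 1) ^ 2) + 1 / (real n + 2) ^ 2"
    by (simp add: add.commute)
  also have "\<dots> \<le> 2 - 1 / (real n + 1) + 1 / (real n + 2) ^ 2" using Suc by simp
  also have "\<dots> \<le> 2 - 1 / (real (Suc n) + 1)"
  proof -
    have eq: "1 / (real n + 1) - 1 / (real n + 2) = 1 / ((real n + 1) * (real n + 2))"
      by (simp add: field_simps)
    have "(real n + 1) * (real n + 2) \<le> (real n + 2) ^ 2" by (simp add: power2_eq_square)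
    then have "1 / (real n + 2) ^ 2 \<le> 1 / ((real n + 1) * (real n + 2))"
      by (intro divide_left_mono) auto
    then have "1 / (real n + 2) ^ 2 \<le> 1 / (real n + 1) - 1 / (real n + 2)" using eq by simp
    moreover have e2: "1 / (real (Suc n) + 1) = 1 / (real n + 2)" by simp
    ultimately show ?thesis by linarith
  qed
  finally show ?case .
qed

lemma sum_inv_sq2: "(\<Sum>i=0..n. 1 / (real i + 1) ^ 2) \<le> 2"
  using sum_inv_sq[of n] by (smt (verit) divide_nonneg_nonneg of_nat_0_le_iff)

lemma conv_poly: "(\<Sum>j=0..n. 1 / ((real j + 1) ^ 2 * (real (n - j) + 1) ^ 2)) \<le> 8 / (real n + 1) ^ 2"
proof -
  have pt: "1 / ((real j + 1) ^ 2 * (real (n - j) + 1) ^ 2)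
      \<le> (2 / (real j + 1) ^ 2 + 2 / (real (n - j) + 1) ^ 2) / (real n + 1) ^ 2" if "j \<in> {0..n}" for j
  proof -
    define a where "a = real j + 1"
    define b where "b = real (n - j) + 1"
    have ab: "a \<ge> 1" "b \<ge> 1" "a + b = real n + 2" using that by (auto simp: a_def b_def of_nat_diff)
    have "(real n + 1) ^ 2 \<le> (a + b) ^ 2" using ab by (intro power_mono) auto
    also have "(a + b) ^ 2 \<le> 2 * a ^ 2 + 2 * b ^ 2"
    proof -
      have "(a + b)^2 + (a - b)^2 = 2 * a ^ 2 + 2 * b ^ 2" by (simp add: power2_eq_square algebra_simps)
      moreover have "0 \<le> (a - b)^2" by simp
      ultimately show ?thesis by linarith
    qed
    finally have h: "(real n + 1) ^ 2 \<le> 2 * a ^ 2 + 2 * b ^ 2" .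
    have "1 / (a ^ 2 * b ^ 2) \<le> (2 / a ^ 2 + 2 / b ^ 2) / (real n + 1) ^ 2"
      using h ab by (simp add: field_simps)
    then show ?thesis by (simp add: a_def b_def)
  qed
  have "(\<Sum>j=0..n. 1 / ((real j + 1) ^ 2 * (real (n - j) + 1) ^ 2))
      \<le> (\<Sum>j=0..n. (2 / (real j + 1) ^ 2 + 2 / (real (n - j) + 1) ^ 2) / (real n + 1) ^ 2)"
    by (rule sum_mono) (rule pt)
  also have "\<dots> = ((\<Sum>j=0..n. 2 / (real j + 1) ^ 2) + (\<Sum>j=0..n. 2 / (real (n - j) + 1) ^ 2)) / (real n + 1) ^ 2"
    by (simp only: sum.distrib[symmetric] sum_divide_distrib)
  also have "(\<Sum>j=0..n. 2 / (real (n - j) + 1) ^ 2) = (\<Sum>j=0..n. 2 / (real j + 1) ^ 2)"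
    by (subst sum.atLeastAtMost_rev) simp
  also have "(\<Sum>j=0..n. 2 / (real j + 1) ^ 2) = 2 * (\<Sum>j=0..n. 1 / (real j + 1) ^ 2)"
    by (simp add: sum_distrib_left)
  finally show ?thesis using sum_inv_sq2[of n]
    by (smt (verit) divide_right_mono zero_le_power2)
qed

context wseq begin

lemma Vw_conv: "(\<Sum>j=0..n. Vw e j * Vw e (n - j)) \<le> 8 * e 1 * Vw e n"
proof -
  have "(\<Sum>j=0..n. Vw e j * Vw e (n - j))
      \<le> (\<Sum>j=0..n. e 1 * Rh e n * (1 / ((real j + 1) ^ 2 * (real (n - j) + 1) ^ 2)))"
  proof (rule sum_mono)
    fix j assume j: "j \<in> {0..n}"
    have "Vw e j * Vw e (n - j) = (Rh e j * Rh e (n - j)) * (1 / ((real j + 1) ^ 2 * (real (n - j) + 1) ^ 2))"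
      unfolding Vw_def by simp
    also have "\<dots> \<le> (e 1 * Rh e n) * (1 / ((real j + 1) ^ 2 * (real (n - j) + 1) ^ 2))"
      using Rh_prod[of j "n - j"] j by (intro mult_right_mono) auto
    finally show "Vw e j * Vw e (n - j) \<le> e 1 * Rh e n * (1 / ((real j + 1) ^ 2 * (real (n - j) + 1) ^ 2))" .
  qed
  also have "\<dots> = e 1 * Rh e n * (\<Sum>j=0..n. 1 / ((real j + 1) ^ 2 * (real (n - j) + 1) ^ 2))"
    by (simp add: sum_distrib_left)
  also have "\<dots> \<le> e 1 * Rh e n * (8 / (real n + 1) ^ 2)"
    using epos[of 1] Rh_pos[of n] by (intro mult_left_mono conv_poly) auto
  also have "\<dots> = 8 * e 1 * Vw e n" unfolding Vw_def by simp
  finally show ?thesis .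
qed

lemma sq_le_pow2: "(real n + 1) ^ 2 \<le> 4 * 2 ^ n"
proof (induction n)
  case 0 then show ?case by simp
next
  case (Suc n)
  show ?case
  proof (cases "n \<le> 1")
    case True
    then have "n = 0 \<or> n = 1" by auto
    then show ?thesis by auto
  next
    case False
    then have "real n \<ge> 2" by auto
    then have sq: "2 * real n \<le> real n * real n" by (simp add: mult_right_mono)
    then have "(real (Suc n) + 1) ^ 2 \<le> 2 * (real n + 1) ^ 2"
    proof -
      have "(real (Suc n) + 1) ^ 2 = real n * real n + 4 * real n + 4" by (simp add: power2_eq_square algebra_simps)
      moreover have "2 * (real n + 1) ^ 2 = 2 * (real n * real n) + 4 * real n + 2" by (simp add: power2_eq_square algebra_simps)
      ultimately show ?thesis using sq \<open>real n \<ge> 2\<close> by linarith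
    qed
    also have "\<dots> \<le> 2 * (4 * 2 ^ n)" using Suc by simp
    finally show ?thesis by simp
  qed
qed

lemma Vw_super: assumes "L > 0" shows "\<exists>r>0. \<forall>n. r * L ^ n \<le> Vw e n"
proof -
  define m0 where "m0 = nat \<lceil>4 * L\<rceil> + 1"
  have m0: "1 \<le> m0" "4 * L \<le> real m0" unfolding m0_def by auto linarith
  define r1 where "r1 = e m0 / 4"
  have r1: "r1 > 0" using epos[OF m0(1)] by (simp add: r1_def)
  define r2 where "r2 = Min ((\<lambda>n. Vw e n / L ^ n) ` {..<m0})"
  have "0 \<in> {..<m0}" using m0(1) by simp
  then have ne: "{..<m0} \<noteq> {}" by blast
  have r2: "r2 > 0" unfolding r2_def using ne Vw_pos assms
    by (subst Min_gr_iff) auto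
  have big: "min r1 r2 * L ^ n \<le> Vw e n" for n
  proof (cases "n < m0")
    case True
    have "r2 \<le> Vw e n / L ^ n" unfolding r2_def using True by (intro Min_le) auto
    then have "r2 * L ^ n \<le> Vw e n" using assms by (simp add: le_divide_eq)
    moreover have "min r1 r2 * L ^ n \<le> r2 * L ^ n" using assms by (intro mult_right_mono) auto
    ultimately show ?thesis by linarith
  next
    case False
    have "e m0 * (real m0 / 2) ^ n \<le> Rh e n" using False m0 by (intro Rh_ge) auto
    moreover have "(2 * L) ^ n \<le> (real m0 / 2) ^ n" using m0 assms by (intro power_mono) auto
    ultimately have "e m0 * (2 * L) ^ n \<le> Rh e n"
      using epos[OF m0(1)] by (smt (verit) mult_left_mono)
    then have "e m0 * 2 ^ n * L ^ n \<le> Rh e n" by (simp add: power_mult_distrib algebra_simps)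
    moreover have "(real n + 1) ^ 2 \<le> 4 * 2 ^ n" by (rule sq_le_pow2)
    moreover have "r1 * L ^ n * (real n + 1) ^ 2 \<le> r1 * L ^ n * (4 * 2 ^ n)"
      using r1 assms sq_le_pow2[of n] by (intro mult_left_mono) auto
    moreover have "r1 * L ^ n * (4 * 2 ^ n) = e m0 * 2 ^ n * L ^ n" by (simp add: r1_def)
    ultimately have "r1 * L ^ n * (real n + 1) ^ 2 \<le> Rh e n" by linarith
    then have "r1 * L ^ n \<le> Vw e n" unfolding Vw_def by (simp add: le_divide_eq)
    moreover have "min r1 r2 * L ^ n \<le> r1 * L ^ n" using assms by (intro mult_right_mono) auto
    ultimately show ?thesis by linarith
  qed
  show ?thesis using big r1 r2 by (intro exI[of _ "min r1 r2"]) auto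
qed

end




lemma in_ball_U:
  fixes U :: "('a list \<Rightarrow> 'k::real_normed_field) set"
  assumes ball: "{c \<in> ell_inf M. ell_norm M c < \<epsilon>} \<subseteq> U" and M: "M > 0"
    and b: "b < \<epsilon>" and bd: "\<And>\<eta>. norm (u \<eta>) \<le> b * (M ^ length \<eta> * fact (length \<eta>))"
  shows "u \<in> U"
proof -
  have "u \<in> ell_inf M" using ell_inf_iff[OF M] bd by blast
  moreover have "ell_norm M u \<le> b" by (rule ell_norm_le[OF M bd])
  ultimately show ?thesis using ball b by auto
qed

lemma zero_nbhd_weight:
  fixes U :: "('a list \<Rightarrow> 'k::real_normed_field) set"
  assumes U: "silva_zero_nbhd U"
  obtains e where "wseq e"
    "\<And>x. x \<in> LC \<Longrightarrow> (\<And>\<eta>. norm (x \<eta>) \<le> fact (length \<eta>) * Vw e (length \<eta>)) \<Longrightarrow> x \<in> U"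
proof -
  have "\<forall>m. \<exists>\<epsilon>. 1 \<le> m \<longrightarrow> \<epsilon> > 0 \<and> {c \<in> ell_inf (real m). ell_norm (real m) c < \<epsilon>} \<subseteq> U"
    using U unfolding silva_zero_nbhd_def by auto
  then obtain \<epsilon>0 where e0: "\<And>m. 1 \<le> m \<Longrightarrow> \<epsilon>0 m > 0 \<and> {c \<in> ell_inf (real m). ell_norm (real m) c < \<epsilon>0 m} \<subseteq> U"
    by metis
  define e where "e m = Min (\<epsilon>0 ` {1..m}) / 4" for m
  have epos: "0 < e m" if "1 \<le> m" for m
  proof -
    have "0 < Min (\<epsilon>0 ` {1..m})" using that e0 by (subst Min_gr_iff) auto
    then show ?thesis unfolding e_def by simp
  qed
  have emono: "e m' \<le> e m" if "1 \<le> m" "m \<le> m'" for m m'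
    unfolding e_def using that by (intro divide_right_mono Min_antimono) auto
  have ele: "e m \<le> \<epsilon>0 m / 4" if "1 \<le> m" for m
    unfolding e_def using that by (intro divide_right_mono Min_le) auto
  interpret wseq e using epos emono by unfold_locales auto
  have "wseq e" ..
  moreover have "x \<in> U" if x: "x \<in> LC" and xb: "\<And>\<eta>. norm (x \<eta>) \<le> fact (length \<eta>) * Vw e (length \<eta>)" for x
  proof -
    obtain M0 K where M0: "M0 > 0" and K: "\<And>\<eta>. norm (x \<eta>) \<le> K * (M0 ^ length \<eta> * fact (length \<eta>))"
      using x unfolding LC_iff by auto
    have K0: "K \<ge> 0" using K[of "[]"] by simp (smt (verit) norm_ge_zero)
    define m0 where "m0 = nat \<lceil>4 * M0\<rceil> + 1"
    have m0: "1 \<le> m0" "4 * M0 \<le> real m0" unfolding m0_def by auto linarith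
    have e0m0: "\<epsilon>0 m0 > 0" using e0 m0 by auto
    obtain L where L: "(1/2::real) ^ L < \<epsilon>0 m0 / (K + 1)"
      using real_arch_pow_inv[of "\<epsilon>0 m0 / (K + 1)" "1/2"] e0m0 K0 by auto
    have KL: "K / 2 ^ L < \<epsilon>0 m0"
    proof -
      have "K / 2 ^ L \<le> (K + 1) * (1/2) ^ L" by (simp add: power_one_over field_simps)
      also have "\<dots> < (K + 1) * (\<epsilon>0 m0 / (K + 1))" using L K0 by (intro mult_strict_left_mono) auto
      also have "\<dots> = \<epsilon>0 m0" using K0 by simp
      finally show ?thesis .
    qed
    define y where "y i = (\<lambda>\<eta>. (2::'k) ^ i * (if i \<le> length \<eta> then x \<eta> else 0))" for i
    have yL: "y L \<in> U"
    proof (rule in_ball_U)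
      show "{c \<in> ell_inf (real m0). ell_norm (real m0) c < \<epsilon>0 m0} \<subseteq> U" using e0 m0 by auto
      show "real m0 > 0" using m0 by simp
      show "K / 2 ^ L < \<epsilon>0 m0" by (rule KL)
      fix \<eta> :: "'a list"
      let ?n = "length \<eta>"
      show "norm (y L \<eta>) \<le> K / 2 ^ L * (real m0 ^ ?n * fact ?n)"
      proof (cases "L \<le> ?n")
        case True
        have "norm (y L \<eta>) = 2 ^ L * norm (x \<eta>)" using True by (simp add: y_def norm_mult norm_power)
        also have "\<dots> \<le> 2 ^ L * (K * (M0 ^ ?n * fact ?n))" using K by (intro mult_left_mono) auto
        also have "\<dots> \<le> K / 2 ^ L * (real m0 ^ ?n * fact ?n)"
        proof -
          have "(4::real) ^ L \<le> 4 ^ ?n" using True by (intro power_increasing) auto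
          then have "4 ^ L * M0 ^ ?n \<le> 4 ^ ?n * M0 ^ ?n" using M0 by (intro mult_right_mono) auto
          also have "\<dots> = (4 * M0) ^ ?n" by (simp add: power_mult_distrib)
          also have "\<dots> \<le> real m0 ^ ?n" using m0 M0 by (intro power_mono) auto
          finally have h: "4 ^ L * M0 ^ ?n \<le> real m0 ^ ?n" .
          have "(4::real) ^ L = 2 ^ L * 2 ^ L" by (simp add: power_mult_distrib[symmetric])
          then have "2 ^ L * 2 ^ L * M0 ^ ?n \<le> real m0 ^ ?n" using h by simp
          then have "2 ^ L * M0 ^ ?n \<le> real m0 ^ ?n / 2 ^ L" by (simp add: field_simps)
          then have "K * (2 ^ L * M0 ^ ?n) * fact ?n \<le> K * (real m0 ^ ?n / 2 ^ L) * fact ?n"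
            using K0 by (intro mult_right_mono mult_left_mono) auto
          then show ?thesis by (simp add: algebra_simps)
        qed
        finally show ?thesis .
      next
        case False
        then show ?thesis using K0 by (simp add: y_def)
      qed
    qed
    have ustep: "(\<lambda>\<eta>. (2::'k) ^ (j + 1) * (if length \<eta> = j then x \<eta> else 0)) \<in> U" for j
    proof -
      obtain m where m: "m \<in> {1..j+1}" "Rh e j = e m * (real m / 2) ^ j" using Rh_attained by blast
      show ?thesis
      proof (rule in_ball_U)
        show "{c \<in> ell_inf (real m). ell_norm (real m) c < \<epsilon>0 m} \<subseteq> U" using e0 m by auto
        show "real m > 0" using m by simp
        show "\<epsilon>0 m / 2 < \<epsilon>0 m" using e0 m by auto
        fix \<eta> :: "'a list"
        let ?n = "length \<eta>"
        show "norm (2 ^ (j + 1) * (if ?n = j then x \<eta> else 0)) \<le> \<epsilon>0 m / 2 * (real m ^ ?n * fact ?n)"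
        proof (cases "?n = j")
          case True
          have "norm ((2::'k) ^ (j + 1) * (if ?n = j then x \<eta> else 0)) = 2 ^ (j+1) * norm (x \<eta>)"
            using True by (simp add: norm_mult norm_power)
          also have "\<dots> \<le> 2 ^ (j+1) * (fact j * Vw e j)" using xb[of \<eta>] True by (intro mult_left_mono) auto
          also have "\<dots> \<le> 2 ^ (j+1) * (fact j * Rh e j)" using Vw_le_Rh by (intro mult_left_mono) auto
          also have "\<dots> = 2 * fact j * e m * real m ^ j" using m(2) by (simp add: power_divide)
          also have "\<dots> \<le> 2 * fact j * (\<epsilon>0 m / 4) * real m ^ j" using ele[of m] m by (intro mult_right_mono mult_left_mono) auto
          also have "\<dots> = \<epsilon>0 m / 2 * (real m ^ ?n * fact ?n)" using True by simp
          finally show ?thesis .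
        next
          case False
          have "0 < \<epsilon>0 m" using e0 m by auto
          then show ?thesis using False by simp
        qed
      qed
    qed
    have yall: "y (L - i) \<in> U" if "i \<le> L" for i
      using that
    proof (induction i)
      case 0 then show ?case using yL by simp
    next
      case (Suc i)
      define j where "j = L - Suc i"
      have jL: "L - i = j + 1" using Suc.prems by (simp add: j_def)
      have yi: "y (j + 1) \<in> U" using Suc jL by simp
      have "absconvex U" using U unfolding silva_zero_nbhd_def by auto
      then have ac: "\<And>xx yy (a::'k) b. xx \<in> U \<Longrightarrow> yy \<in> U \<Longrightarrow> norm a + norm b \<le> 1 \<Longrightarrow> (\<lambda>\<eta>. a * xx \<eta> + b * yy \<eta>) \<in> U"
        unfolding absconvex_def by blast
      have "(\<lambda>\<eta>. (1/2::'k) * ((2::'k) ^ (j + 1) * (if length \<eta> = j then x \<eta> else 0)) + (1/2) * y (j + 1) \<eta>) \<in> U"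
        by (rule ac[OF ustep[of j] yi]) (simp add: norm_divide)
      moreover have "(\<lambda>\<eta>. (1/2::'k) * ((2::'k) ^ (j + 1) * (if length \<eta> = j then x \<eta> else 0)) + (1/2) * y (j + 1) \<eta>) = y j"
        by (rule ext) (auto simp: y_def)
      ultimately show ?case by (simp add: j_def)
    qed
    have "y 0 = x" by (rule ext) (simp add: y_def)
    then show "x \<in> U" using yall[of L] by simp
  qed
  ultimately show ?thesis using that by blast
qed




lemma sum_Pow_card:
  fixes f :: "nat \<Rightarrow> 'b::comm_semiring_1"
  assumes "finite A"
  shows "(\<Sum>S\<in>Pow A. f (card S)) = (\<Sum>k=0..card A. of_nat (card A choose k) * f k)"
proof -
  have "(\<Sum>S\<in>Pow A. f (card S)) = (\<Sum>k=0..card A. \<Sum>S\<in>{S. S \<in> Pow A \<and> card S = k}. f (card S))"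
    using assms by (intro sum.group[symmetric]) (auto simp: card_mono)
  also have "\<dots> = (\<Sum>k=0..card A. of_nat (card A choose k) * f k)"
  proof (rule sum.cong[OF refl])
    fix k
    have "(\<Sum>S\<in>{S. S \<in> Pow A \<and> card S = k}. f (card S)) = (\<Sum>S\<in>{S. S \<subseteq> A \<and> card S = k}. f k)"
      by (intro sum.cong) auto
    also have "\<dots> = of_nat (card {S. S \<subseteq> A \<and> card S = k}) * f k" by simp
    also have "card {S. S \<subseteq> A \<and> card S = k} = card A choose k" using n_subsets[OF assms] .
    finally show "(\<Sum>S\<in>{S. S \<in> Pow A \<and> card S = k}. f (card S)) = of_nat (card A choose k) * f k" .
  qed
  finally show ?thesis .
qed

definition maj :: "('a list \<Rightarrow> 'k::real_normed_field) \<Rightarrow> real fps \<Rightarrow> bool" where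
  "maj x F \<longleftrightarrow> (\<forall>\<eta>. norm (x \<eta>) \<le> fact (length \<eta>) * fps_nth F (length \<eta>))"

definition fle :: "real fps \<Rightarrow> real fps \<Rightarrow> bool" where
  "fle F G \<longleftrightarrow> (\<forall>n. fps_nth F n \<le> fps_nth G n)"

definition fnn :: "real fps \<Rightarrow> bool" where
  "fnn F \<longleftrightarrow> (\<forall>n. 0 \<le> fps_nth F n)"

lemma majD: "maj x F \<Longrightarrow> norm (x \<eta>) \<le> fact (length \<eta>) * fps_nth F (length \<eta>)"
  unfolding maj_def by auto

lemma maj_fnn: "maj x F \<Longrightarrow> fnn F"
  unfolding fnn_def
proof
  fix n assume "maj x F"
  then have "norm (x (replicate n undefined)) \<le> fact n * fps_nth F n"
    using majD[of x F "replicate n undefined"] by simp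
  then have "0 \<le> fact n * fps_nth F n" by (smt (verit) norm_ge_zero)
  moreover have "0 < (fact n :: real)" by simp
  ultimately show "0 \<le> fps_nth F n" by (auto simp: zero_le_mult_iff)
qed

lemma fle_refl: "fle F F" by (simp add: fle_def)
lemma fle_trans: "fle F G \<Longrightarrow> fle G H \<Longrightarrow> fle F H" unfolding fle_def by (meson order_trans)
lemma fle_add: "fle F F' \<Longrightarrow> fle G G' \<Longrightarrow> fle (F + G) (F' + G')" unfolding fle_def by (simp add: add_mono)
lemma fnn_add: "fnn F \<Longrightarrow> fnn G \<Longrightarrow> fnn (F + G)" unfolding fnn_def by simp
lemma fnn_mult: "fnn F \<Longrightarrow> fnn G \<Longrightarrow> fnn (F * G)"
  unfolding fnn_def fps_mult_nth by (auto intro!: sum_nonneg)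
lemma fnn_one: "fnn 1" by (simp add: fnn_def fps_one_nth)
lemma fnn_pow: "fnn F \<Longrightarrow> fnn (F ^ k)"
  by (induction k) (simp_all add: fnn_one fnn_mult)
lemma fnn_fle: "fnn F \<Longrightarrow> fle F G \<Longrightarrow> fnn G" unfolding fnn_def fle_def by (meson order_trans)
lemma fle_mult:
  assumes "fnn F" "fnn G" "fle F F'" "fle G G'"
  shows "fle (F * G) (F' * G')"
  unfolding fle_def fps_mult_nth
proof
  fix n
  show "(\<Sum>i = 0..n. fps_nth F i * fps_nth G (n - i)) \<le> (\<Sum>i = 0..n. fps_nth F' i * fps_nth G' (n - i))"
    using assms unfolding fnn_def fle_def by (intro sum_mono mult_mono) (auto intro: order_trans)
qed
lemma fle_pow: "fnn F \<Longrightarrow> fle F G \<Longrightarrow> fle (F ^ k) (G ^ k)"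
  by (induction k) (auto intro: fle_mult fnn_pow simp: fle_refl)

lemma maj_mono: "maj x F \<Longrightarrow> fle F G \<Longrightarrow> maj x G"
  unfolding maj_def fle_def by (meson mult_left_mono order_trans fact_ge_zero)

lemma maj_add: "maj x F \<Longrightarrow> maj y G \<Longrightarrow> maj (\<lambda>\<eta>. x \<eta> + y \<eta>) (F + G)"
  unfolding maj_def by (auto simp: distrib_left intro: order_trans[OF norm_triangle_ineq] add_mono)

lemma maj_diff: "maj x F \<Longrightarrow> maj y G \<Longrightarrow> maj (\<lambda>\<eta>. x \<eta> - y \<eta>) (F + G)"
  unfolding maj_def by (auto simp: distrib_left intro: order_trans[OF norm_triangle_ineq4] add_mono)

lemma maj_one: "maj (one_ser :: 'a list \<Rightarrow> 'k::real_normed_field) 1"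
  unfolding maj_def one_ser_def by (auto simp: fps_one_nth)

lemma maj_zero: "fnn F \<Longrightarrow> maj (\<lambda>\<eta>. 0) F"
  unfolding maj_def fnn_def by simp

lemma length_nths_sub: "S \<subseteq> {..<length xs} \<Longrightarrow> length (nths xs S) = card S"
  by (simp add: length_nths Int_absorb1 lessThan_def Collect_conj_eq[symmetric]) (metis (no_types, lifting) Collect_cong Collect_mem_eq lessThan_iff subsetD)

lemma shuffle_maj:
  fixes x y :: "'a list \<Rightarrow> 'k::real_normed_field"
  assumes x: "maj x F" and y: "maj y G"
  shows "maj (shuffle x y) (F * G)"
  unfolding maj_def
proof
  fix \<eta> :: "'a list"
  define n where "n = length \<eta>"
  define I where "I = {..<n}"
  have fI: "finite I" and cI: "card I = n" by (auto simp: I_def)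
  have Ff: "fnn F" "fnn G" using maj_fnn x y by auto
  have "norm (shuffle x y \<eta>) \<le> (\<Sum>S\<in>Pow I. norm (x (nths \<eta> S)) * norm (y (nths \<eta> (I - S))))"
    unfolding shuffle_def I_def n_def by (rule order_trans[OF norm_sum]) (simp add: norm_mult)
  also have "\<dots> \<le> (\<Sum>S\<in>Pow I. (fact (card S) * fps_nth F (card S)) * (fact (n - card S) * fps_nth G (n - card S)))"
  proof (rule sum_mono)
    fix S assume S: "S \<in> Pow I"
    then have l1: "length (nths \<eta> S) = card S" by (intro length_nths_sub) (auto simp: I_def n_def)
    have "I - S \<subseteq> {..<length \<eta>}" by (auto simp: I_def n_def)
    then have "length (nths \<eta> (I - S)) = card (I - S)" by (rule length_nths_sub)
    moreover have "card (I - S) = card I - card S"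
      using S fI by (intro card_Diff_subset) (auto intro: finite_subset)
    ultimately have l2: "length (nths \<eta> (I - S)) = n - card S" using cI by simp
    show "norm (x (nths \<eta> S)) * norm (y (nths \<eta> (I - S))) \<le> (fact (card S) * fps_nth F (card S)) * (fact (n - card S) * fps_nth G (n - card S))"
      using majD[OF x, of "nths \<eta> S"] majD[OF y, of "nths \<eta> (I - S)"] l1 l2 Ff
      by (intro mult_mono) (auto simp: fnn_def)
  qed
  also have "\<dots> = (\<Sum>k=0..n. of_nat (n choose k) * ((fact k * fps_nth F k) * (fact (n - k) * fps_nth G (n - k))))"
    using sum_Pow_card[OF fI, of "\<lambda>k. (fact k * fps_nth F k) * (fact (n - k) * fps_nth G (n - k))"] cI by simp
  also have "\<dots> = (\<Sum>k=0..n. fact n * (fps_nth F k * fps_nth G (n - k)))"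
  proof (rule sum.cong[OF refl])
    fix k assume "k \<in> {0..n}"
    then have "fact k * fact (n - k) * (n choose k) = fact n" by (intro binomial_fact_lemma) auto
    then have "(fact k * fact (n - k) * of_nat (n choose k) :: real) = fact n"
      by (metis of_nat_fact of_nat_mult)
    then show "of_nat (n choose k) * ((fact k * fps_nth F k) * (fact (n - k) * fps_nth G (n - k))) = fact n * (fps_nth F k * fps_nth G (n - k))"
      by (simp add: algebra_simps)
  qed
  also have "\<dots> = fact n * fps_nth (F * G) n" by (simp add: fps_mult_nth sum_distrib_left)
  finally show "norm (shuffle x y \<eta>) \<le> fact (length \<eta>) * fps_nth (F * G) (length \<eta>)" by (simp add: n_def)
qed

lemma maj_pow: "maj x F \<Longrightarrow> maj (shuffle_pow x k) (F ^ k)"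
  by (induction k) (auto simp: maj_one shuffle_maj)

lemma shuffle_diff_left: "shuffle (\<lambda>\<eta>. x \<eta> - y \<eta>) z = (\<lambda>\<eta>. shuffle x z \<eta> - shuffle y z \<eta>)"
  unfolding shuffle_def by (auto simp: algebra_simps sum_subtractf)

lemma shuffle_diff_right: "shuffle z (\<lambda>\<eta>. x \<eta> - y \<eta>) = (\<lambda>\<eta>. shuffle z x \<eta> - shuffle z y \<eta>)"
  unfolding shuffle_def by (auto simp: algebra_simps sum_subtractf)

lemma shuffle_sum_right: "shuffle z (\<lambda>\<eta>. \<Sum>k\<in>K. f k \<eta>) = (\<lambda>\<eta>. \<Sum>k\<in>K. shuffle z (f k) \<eta>)"
  unfolding shuffle_def by (auto simp: sum_distrib_left intro: sum.swap)

definition Pser :: "('a list \<Rightarrow> 'k::real_normed_field) \<Rightarrow> nat \<Rightarrow> 'a list \<Rightarrow> 'k" where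
  "Pser x N = (\<lambda>\<eta>. \<Sum>k\<le>N. shuffle_pow x k \<eta>)"

lemma Pser_0: "Pser x 0 = one_ser"
  by (simp add: Pser_def)

lemma Pser_Suc: "Pser x (Suc N) = (\<lambda>\<eta>. one_ser \<eta> + shuffle x (Pser x N) \<eta>)"
proof -
  have "Pser x (Suc N) = (\<lambda>\<eta>. shuffle_pow x 0 \<eta> + (\<Sum>k\<le>N. shuffle_pow x (Suc k) \<eta>))"
    unfolding Pser_def by (rule ext, subst sum.atMost_Suc_shift, simp)
  also have "\<dots> = (\<lambda>\<eta>. one_ser \<eta> + shuffle x (Pser x N) \<eta>)"
    unfolding Pser_def shuffle_sum_right by simp
  finally show ?thesis .
qed

definition Hs :: "real fps \<Rightarrow> nat \<Rightarrow> real fps" where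
  "Hs A N = (\<Sum>k\<le>N. A ^ k)"

lemma Hs_Suc: "Hs A (Suc N) = 1 + A * Hs A N"
  unfolding Hs_def by (subst sum.atMost_Suc_shift) (simp add: sum_distrib_left)

lemma maj_sum: "finite K \<Longrightarrow> (\<And>k. k \<in> K \<Longrightarrow> maj (f k) (G k)) \<Longrightarrow> maj (\<lambda>\<eta>. \<Sum>k\<in>K. f k \<eta>) (\<Sum>k\<in>K. G k)"
proof (induction K rule: finite_induct)
  case empty
  show ?case unfolding maj_def by simp
next
  case (insert a K)
  then have "maj (\<lambda>\<eta>. f a \<eta> + (\<Sum>k\<in>K. f k \<eta>)) (G a + (\<Sum>k\<in>K. G k))"
    by (intro maj_add) auto
  then show ?case using insert by simp
qed

lemma maj_Pser: "maj x A \<Longrightarrow> maj (Pser x N) (Hs A N)"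
  unfolding Pser_def Hs_def by (intro maj_sum maj_pow) auto

lemma pow_nth_zero:
  assumes "fps_nth F 0 = 0"
  shows "n < k \<Longrightarrow> fps_nth (F ^ k) n = 0"
proof (induction k arbitrary: n)
  case 0 then show ?case by simp
next
  case (Suc k)
  have "fps_nth (F ^ Suc k) n = (\<Sum>i = 0..n. fps_nth F i * fps_nth (F ^ k) (n - i))"
    by (simp add: fps_mult_nth)
  also have "\<dots> = 0"
  proof (rule sum.neutral, rule ballI)
    fix i assume i: "i \<in> {0..n}"
    show "fps_nth F i * fps_nth (F ^ k) (n - i) = 0"
      using i Suc.IH[of "n - i"] Suc.prems assms by (cases "i = 0") auto
  qed
  finally show ?case .
qed

lemma maj_zero_at:
  "maj x F \<Longrightarrow> fps_nth F (length \<eta>) = 0 \<Longrightarrow> x \<eta> = 0"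
  using majD[of x F \<eta>] by simp




definition Aser :: "real \<Rightarrow> real \<Rightarrow> real fps" where
  "Aser \<kappa> M = Abs_fps (\<lambda>n. if n = 0 then 0 else \<kappa> * M ^ n)"

definition Gser :: "real \<Rightarrow> real fps" where
  "Gser B = Abs_fps (\<lambda>n. B ^ n)"

lemma gsum_mult: "(\<Sum>i=1..n. (q::real) ^ i) * (1 - q) = q - q ^ (n + 1)"
proof (induction n)
  case 0 then show ?case by simp
next
  case (Suc n)
  have "(\<Sum>i=1..Suc n. q ^ i) = (\<Sum>i=1..n. q ^ i) + q ^ Suc n" by simp
  then have "(\<Sum>i=1..Suc n. q ^ i) * (1 - q) = (\<Sum>i=1..n. q ^ i) * (1 - q) + q ^ Suc n * (1 - q)"
    by (simp add: algebra_simps)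
  also have "\<dots> = q - q ^ (Suc n + 1)" using Suc by (simp add: algebra_simps)
  finally show ?case .
qed

lemma gsum_le: assumes "0 \<le> q" "q < 1" shows "(\<Sum>i=1..n. (q::real) ^ i) \<le> q / (1 - q)"
proof -
  have "(\<Sum>i=1..n. q ^ i) * (1 - q) \<le> q" using gsum_mult[of q n] assms by simp
  then show ?thesis using assms by (simp add: le_divide_eq)
qed

lemma Aser_fnn: "0 \<le> \<kappa> \<Longrightarrow> 0 \<le> M \<Longrightarrow> fnn (Aser \<kappa> M)"
  unfolding fnn_def Aser_def by simp

lemma Aser_0: "fps_nth (Aser \<kappa> M) 0 = 0"
  unfolding Aser_def by simp

lemma Gser_fnn: "0 \<le> B \<Longrightarrow> fnn (Gser B)"
  unfolding fnn_def Gser_def by simp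

lemma geo_step:
  assumes k: "\<kappa> > 0" and M: "M > 0"
  shows "fle (1 + Aser \<kappa> M * Gser (M * (1 + \<kappa>))) (Gser (M * (1 + \<kappa>)))"
  unfolding fle_def
proof
  fix n
  define B where "B = M * (1 + \<kappa>)"
  define q where "q = 1 / (1 + \<kappa>)"
  have B: "B > 0" using k M by (simp add: B_def)
  have q: "0 \<le> q" "q < 1" using k by (auto simp: q_def)
  have Mq: "M = B * q" using k by (simp add: B_def q_def)
  show "fps_nth (1 + Aser \<kappa> M * Gser B) n \<le> fps_nth (Gser B) n"
  proof (cases "n = 0")
    case True then show ?thesis by (simp add: Aser_def Gser_def fps_mult_nth)
  next
    case False
    have "fps_nth (Aser \<kappa> M * Gser B) n = (\<Sum>i=0..n. fps_nth (Aser \<kappa> M) i * B ^ (n - i))"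
      by (simp add: fps_mult_nth Gser_def)
    also have "\<dots> = (\<Sum>i=1..n. fps_nth (Aser \<kappa> M) i * B ^ (n - i))"
      by (subst sum.atLeast_Suc_atMost) (auto simp: Aser_def)
    also have "\<dots> = (\<Sum>i=1..n. \<kappa> * B ^ n * q ^ i)"
    proof (rule sum.cong[OF refl])
      fix i assume i: "i \<in> {1..n}"
      have "B ^ n = B ^ i * B ^ (n - i)" using i by (simp add: power_add[symmetric])
      then show "fps_nth (Aser \<kappa> M) i * B ^ (n - i) = \<kappa> * B ^ n * q ^ i"
        using i by (simp add: Aser_def Mq power_mult_distrib)
    qed
    also have "\<dots> = \<kappa> * B ^ n * (\<Sum>i=1..n. q ^ i)" by (simp add: sum_distrib_left)
    also have "\<dots> \<le> \<kappa> * B ^ n * (q / (1 - q))"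
      using gsum_le[OF q] k B by (intro mult_left_mono) auto
    also have "q / (1 - q) = 1 / \<kappa>" using k by (simp add: q_def field_simps)
    also have "\<kappa> * B ^ n * (1 / \<kappa>) = B ^ n" using k by simp
    finally show ?thesis using False by (simp add: Gser_def)
  qed
qed

lemma Hs_le_G:
  assumes k: "\<kappa> > 0" and M: "M > 0"
  shows "fle (Hs (Aser \<kappa> M) N) (Gser (M * (1 + \<kappa>)))"
proof (induction N)
  case 0
  have "0 \<le> M * (1 + \<kappa>)" using k M by simp
  then show ?case by (simp add: Hs_def fle_def Gser_def fps_one_nth)
next
  case (Suc N)
  have fA: "fnn (Aser \<kappa> M)" using k M by (intro Aser_fnn) auto
  have fH: "fnn (Hs (Aser \<kappa> M) N)" unfolding Hs_def
    by (simp add: fnn_def fnn_pow[OF fA, unfolded fnn_def] sum_nonneg fps_sum_nth)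
  have "fle (1 + Aser \<kappa> M * Hs (Aser \<kappa> M) N) (1 + Aser \<kappa> M * Gser (M * (1 + \<kappa>)))"
    by (intro fle_add fle_refl fle_mult fA fH Suc)
  then show ?case unfolding Hs_Suc using geo_step[OF k M] fle_trans by blast
qed

lemma Hs_fnn: "fnn A \<Longrightarrow> fnn (Hs A N)"
  unfolding Hs_def by (simp add: fnn_def fnn_pow[unfolded fnn_def] sum_nonneg fps_sum_nth)

lemma cprime_0: "c [] \<noteq> 0 \<Longrightarrow> cprime c [] = 0"
  by (simp add: cprime_def one_ser_def)

lemma cprime_ne: "\<eta> \<noteq> [] \<Longrightarrow> cprime c \<eta> = - (c \<eta> / c [])"
  by (simp add: cprime_def one_ser_def)

lemma unit_data:
  fixes c :: "'a list \<Rightarrow> 'k::real_normed_field"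
  assumes "c \<in> LC_units"
  obtains M K where "M > 0" "K > 0" "\<And>\<eta>. norm (c \<eta>) \<le> K * (M ^ length \<eta> * fact (length \<eta>))"
    "maj (cprime c) (Aser (K / norm (c [])) M)"
proof -
  have c0: "c [] \<noteq> 0" and cL: "c \<in> LC" using assms by (auto simp: LC_units_def)
  obtain M K where M: "M > 0" and K: "\<And>\<eta>. norm (c \<eta>) \<le> K * (M ^ length \<eta> * fact (length \<eta>))"
    using cL unfolding LC_iff by auto
  have Kp: "K > 0" using K[of "[]"] c0 by simp (smt (verit) norm_le_zero_iff)
  have "maj (cprime c) (Aser (K / norm (c [])) M)"
    unfolding maj_def
  proof
    fix \<eta> :: "'a list"
    show "norm (cprime c \<eta>) \<le> fact (length \<eta>) * fps_nth (Aser (K / norm (c [])) M) (length \<eta>)"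
    proof (cases "\<eta> = []")
      case True then show ?thesis using c0 by (simp add: cprime_0 Aser_def)
    next
      case False
      then have "norm (cprime c \<eta>) = norm (c \<eta>) / norm (c [])" by (simp add: cprime_ne norm_divide)
      also have "\<dots> \<le> K * (M ^ length \<eta> * fact (length \<eta>)) / norm (c [])"
        using K c0 by (intro divide_right_mono) auto
      also have "\<dots> = fact (length \<eta>) * fps_nth (Aser (K / norm (c [])) M) (length \<eta>)"
        using False by (simp add: Aser_def)
      finally show ?thesis .
    qed
  qed
  then show ?thesis using that M Kp K by blast
qed

lemma shuffle_inv_Pser: "shuffle_inv c \<eta> = inverse (c []) * Pser (cprime c) (length \<eta>) \<eta>"
  by (simp add: shuffle_inv_def Pser_def)

lemma Pser_bound:
  fixes c :: "'a list \<Rightarrow> 'k::real_normed_field"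
  assumes "c \<in> LC_units"
  obtains B where "B > 0" "\<And>N \<eta>. norm (Pser (cprime c) N \<eta>) \<le> fact (length \<eta>) * B ^ length \<eta>"
    "\<And>k \<eta>. length \<eta> < k \<Longrightarrow> shuffle_pow (cprime c) k \<eta> = 0"
proof -
  obtain M K where M: "M > 0" "K > 0" "\<And>\<eta>. norm (c \<eta>) \<le> K * (M ^ length \<eta> * fact (length \<eta>))"
    and mj: "maj (cprime c) (Aser (K / norm (c [])) M)" using unit_data[OF assms] by blast
  define \<kappa> where "\<kappa> = K / norm (c [])"
  have c0: "c [] \<noteq> 0" using assms by (auto simp: LC_units_def)
  have k: "\<kappa> > 0" using M c0 by (simp add: \<kappa>_def)
  have mN: "maj (Pser (cprime c) N) (Gser (M * (1 + \<kappa>)))" for N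
    using maj_mono[OF maj_Pser[OF mj] Hs_le_G[OF k M(1), unfolded \<kappa>_def]] by (simp add: \<kappa>_def)
  have b: "norm (Pser (cprime c) N \<eta>) \<le> fact (length \<eta>) * (M * (1 + \<kappa>)) ^ length \<eta>" for N \<eta>
    using majD[OF mN[of N], of \<eta>] by (simp add: Gser_def)
  have z: "shuffle_pow (cprime c) k \<eta> = 0" if lt: "length \<eta> < k" for k \<eta>
  proof -
    have "fps_nth (Aser (K / norm (c [])) M ^ k) (length \<eta>) = 0" by (rule pow_nth_zero[OF Aser_0 lt])
    then show ?thesis by (rule maj_zero_at[OF maj_pow[OF mj]])
  qed
  show ?thesis using that[of "M * (1 + \<kappa>)"] b z M k by auto
qed

lemma inv_unit:
  fixes c :: "'a list \<Rightarrow> 'k::real_normed_field"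
  assumes "c \<in> LC_units"
  shows "shuffle_inv c \<in> LC_units"
proof -
  obtain B where B: "B > 0" "\<And>N \<eta>. norm (Pser (cprime c) N \<eta>) \<le> fact (length \<eta>) * B ^ length \<eta>"
    "\<And>k \<eta>. length \<eta> < k \<Longrightarrow> shuffle_pow (cprime c) k \<eta> = 0"
    by (rule Pser_bound[OF assms]) blast
  have c0: "c [] \<noteq> 0" using assms by (auto simp: LC_units_def)
  have "norm (shuffle_inv c \<eta>) \<le> inverse (norm (c [])) * (B ^ length \<eta> * fact (length \<eta>))" for \<eta>
    unfolding shuffle_inv_Pser norm_mult norm_inverse
    using B(2)[of "length \<eta>" \<eta>] by (intro mult_left_mono) (auto simp: mult.commute)
  then have "shuffle_inv c \<in> LC" unfolding LC_iff using B by blast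
  moreover have "shuffle_inv c [] \<noteq> 0" using c0 by (simp add: shuffle_inv_def one_ser_def)
  ultimately show ?thesis by (simp add: LC_units_def)
qed




lemma partial_limit:
  fixes c :: "'a list \<Rightarrow> 'k::real_normed_field"
  assumes cu: "c \<in> LC_units"
  shows "limitin silva_topology (\<lambda>n \<eta>. \<Sum>k<n. shuffle_pow (cprime c) k \<eta>)
               (\<lambda>\<eta>. \<Sum>k\<le>length \<eta>. shuffle_pow (cprime c) k \<eta>) sequentially"
proof -
  obtain B where B: "B > 0" "\<And>N \<eta>. norm (Pser (cprime c) N \<eta>) \<le> fact (length \<eta>) * B ^ length \<eta>"
    "\<And>k \<eta>. length \<eta> < k \<Longrightarrow> shuffle_pow (cprime c) k \<eta> = 0"
    by (rule Pser_bound[OF cu]) blast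
  define S where "S = (\<lambda>\<eta>. \<Sum>k\<le>length \<eta>. shuffle_pow (cprime c) k \<eta>)"
  define Sn where "Sn = (\<lambda>n \<eta>. \<Sum>k<n. shuffle_pow (cprime c) k \<eta>)"
  have SP: "S \<eta> = Pser (cprime c) (length \<eta>) \<eta>" for \<eta> by (simp add: S_def Pser_def)
  have Sb: "norm (S \<eta>) \<le> fact (length \<eta>) * B ^ length \<eta>" for \<eta> using B(2) SP by simp
  have Snb: "norm (Sn n \<eta>) \<le> fact (length \<eta>) * B ^ length \<eta>" for n \<eta>
  proof (cases n)
    case 0 then show ?thesis using B(1) by (simp add: Sn_def)
  next
    case (Suc p)
    then have "Sn n \<eta> = Pser (cprime c) p \<eta>" by (simp add: Sn_def Pser_def lessThan_Suc_atMost)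
    then show ?thesis using B(2) by simp
  qed
  have SLC: "S \<in> LC" unfolding LC_iff using Sb B(1) by (intro exI[of _ B] exI[of _ 1] conjI) (auto simp: mult.commute)
  have "\<forall>U. silva_open U \<and> S \<in> U \<longrightarrow> eventually (\<lambda>n. Sn n \<in> U) sequentially"
  proof (intro allI impI)
    fix U assume U: "silva_open U \<and> S \<in> U"
    then obtain Z where Z: "silva_zero_nbhd Z" "(\<lambda>u \<eta>. S \<eta> + u \<eta>) ` Z \<subseteq> U"
      unfolding silva_open_def by blast
    have B2: "2 * B > 0" using B by simp
    obtain \<epsilon> where \<epsilon>: "\<epsilon> > 0" "{c \<in> ell_inf (2 * B). ell_norm (2 * B) c < \<epsilon>} \<subseteq> Z"
      using Z(1) B2 unfolding silva_zero_nbhd_def by blast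
    obtain N where N: "(1/2::real) ^ N < \<epsilon> / 2" using real_arch_pow_inv[of "\<epsilon>/2" "1/2"] \<epsilon> by auto
    have "Sn n \<in> U" if n: "n \<ge> N" for n
    proof -
      define d where "d = (\<lambda>\<eta>. Sn n \<eta> - S \<eta>)"
      have "d \<in> Z"
      proof (rule in_ball_U[OF \<epsilon>(2) B2, where b = "2 * (1/2::real) ^ N"])
        show "2 * (1/2) ^ N < \<epsilon>" using N by simp
        fix \<eta> :: "'a list"
        define m where "m = length \<eta>"
        show "norm (d \<eta>) \<le> 2 * (1 / 2) ^ N * ((2 * B) ^ length \<eta> * fact (length \<eta>))"
        proof (cases "m < n")
          case True
          have "Sn n \<eta> = S \<eta>" unfolding Sn_def S_def
          proof (rule sum.mono_neutral_right)
            show "{..length \<eta>} \<subseteq> {..<n}" using True by (auto simp: m_def)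
            show "\<forall>i\<in>{..<n} - {..length \<eta>}. shuffle_pow (cprime c) i \<eta> = 0" using B(3) by auto
          qed auto
          then show ?thesis using B(1) by (simp add: d_def)
        next
          case False
          have "norm (d \<eta>) \<le> norm (Sn n \<eta>) + norm (S \<eta>)" unfolding d_def by (rule norm_triangle_ineq4)
          also have "\<dots> \<le> 2 * (fact m * B ^ m)" using Snb[of n \<eta>] Sb[of \<eta>] by (simp add: m_def)
          also have "\<dots> = 2 * (1/2) ^ m * ((2 * B) ^ m * fact m)"
            by (simp add: power_mult_distrib power_one_over field_simps)
          also have "\<dots> \<le> 2 * (1/2) ^ N * ((2 * B) ^ m * fact m)"
            using False n B(1) by (intro mult_right_mono mult_left_mono power_decreasing) auto
          finally show ?thesis by (simp add: m_def)
        qed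
      qed
      moreover have "Sn n = (\<lambda>\<eta>. S \<eta> + d \<eta>)" by (simp add: d_def)
      ultimately show ?thesis using Z(2) by blast
    qed
    then show "eventually (\<lambda>n. Sn n \<in> U) sequentially" unfolding eventually_sequentially by blast
  qed
  then show ?thesis unfolding limitin_def topspace_silva openin_silva S_def[symmetric] Sn_def[symmetric]
    using SLC by blast
qed




lemma fle_scale: "0 \<le> a \<Longrightarrow> fle F G \<Longrightarrow> fle (fps_const a * F) (fps_const a * G)"
  unfolding fle_def by (simp add: mult_left_mono)

lemma fnn_scale: "0 \<le> a \<Longrightarrow> fnn F \<Longrightarrow> fnn (fps_const a * F)"
  unfolding fnn_def by simp

lemma fle_scale_le: "a \<le> b \<Longrightarrow> fnn F \<Longrightarrow> fle (fps_const a * F) (fps_const b * F)"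
  unfolding fle_def fnn_def by (simp add: mult_right_mono)

context wseq begin

definition VF :: "real fps" where "VF = Abs_fps (Vw e)"

lemma VF_nth: "fps_nth VF n = Vw e n" by (simp add: VF_def)

lemma VF_fnn: "fnn VF" unfolding fnn_def VF_nth using Vw_pos less_imp_le by blast

lemma VF_conv: "fle (VF * VF) (fps_const (8 * e 1) * VF)"
  unfolding fle_def fps_mult_left_const_nth
  by (simp only: fps_mult_nth VF_nth Vw_conv flip: One_nat_def) simp

lemma VF_prod:
  assumes "fnn F" "fnn G" "fle F (fps_const \<alpha> * VF)" "fle G (fps_const \<beta> * VF)" "0 \<le> \<alpha>" "0 \<le> \<beta>"
  shows "fle (F * G) (fps_const (\<alpha> * \<beta> * (8 * e 1)) * VF)"
proof -
  have "fle (F * G) ((fps_const \<alpha> * VF) * (fps_const \<beta> * VF))" by (rule fle_mult[OF assms(1-4)])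
  also have "(fps_const \<alpha> * VF) * (fps_const \<beta> * VF) = fps_const (\<alpha> * \<beta>) * (VF * VF)"
    by (simp add: fps_const_mult[symmetric] mult.assoc mult.left_commute del: fps_const_mult)
  finally have "fle (F * G) (fps_const (\<alpha> * \<beta>) * (VF * VF))" .
  moreover have "fle (fps_const (\<alpha> * \<beta>) * (VF * VF)) (fps_const (\<alpha> * \<beta>) * (fps_const (8 * e 1) * VF))"
    using assms by (intro fle_scale VF_conv) auto
  moreover have "fps_const (\<alpha> * \<beta>) * (fps_const (8 * e 1) * VF) = fps_const (\<alpha> * \<beta> * (8 * e 1)) * VF"
    by (simp add: fps_const_mult[symmetric] mult.assoc del: fps_const_mult)
  ultimately show ?thesis using fle_trans by metis
qed

end


lemma cprime_diff_bound:
  fixes c w :: "'a list \<Rightarrow> 'k::real_normed_field"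
  assumes c0: "c [] \<noteq> 0" and a0: "c [] + w [] \<noteq> 0"
    and na: "norm (c []) / 2 \<le> norm (c [] + w [])"
    and w0: "norm (w []) \<le> \<epsilon> * v0"
    and cb: "norm (c \<eta>) \<le> K * (M ^ length \<eta> * fact (length \<eta>))"
    and Mv: "r' * M ^ length \<eta> \<le> v" and r': "r' > 0" and K: "K > 0"
    and wb: "norm (w \<eta>) \<le> fact (length \<eta>) * (\<epsilon> * v)"
    and pos: "0 \<le> \<epsilon>" "0 \<le> v0" "0 \<le> v" "M > 0"
  shows "norm (cprime (\<lambda>\<eta>. c \<eta> + w \<eta>) \<eta> - cprime c \<eta>)
     \<le> fact (length \<eta>) * (\<epsilon> * (2 * v0 * K / (norm (c []) ^ 2 * r') + 2 / norm (c [])) * v)"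
proof (cases "\<eta> = []")
  case True
  then show ?thesis using c0 a0 pos r' K by (simp add: cprime_0)
next
  case False
  define c0' where "c0' = c []"
  define a0' where "a0' = c [] + w []"
  define nc where "nc = norm (c [])"
  define F where "F = (fact (length \<eta>) :: real)"
  have ncp: "nc > 0" using c0 by (simp add: nc_def)
  have Fp: "F > 0" by (simp add: F_def)
  have c0n: "c0' \<noteq> 0" and a0n: "a0' \<noteq> 0" using c0 a0 by (auto simp: c0'_def a0'_def)
  have "cprime (\<lambda>\<eta>. c \<eta> + w \<eta>) \<eta> - cprime c \<eta> = c \<eta> / c0' - (c \<eta> + w \<eta>) / a0'"
    using False by (simp add: cprime_ne c0'_def a0'_def)
  also have "\<dots> = c \<eta> * ((a0' - c0') / (c0' * a0')) - w \<eta> / a0'"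
    using c0n a0n by (simp add: field_simps)
  also have "a0' - c0' = w []" by (simp add: a0'_def c0'_def)
  finally have eq: "cprime (\<lambda>\<eta>. c \<eta> + w \<eta>) \<eta> - cprime c \<eta> = c \<eta> * (w [] / (c0' * a0')) - w \<eta> / a0'" .
  have "norm (cprime (\<lambda>\<eta>. c \<eta> + w \<eta>) \<eta> - cprime c \<eta>) \<le> norm (c \<eta>) * (norm (w []) / (nc * norm a0')) + norm (w \<eta>) / norm a0'"
    unfolding eq by (rule order_trans[OF norm_triangle_ineq4]) (simp add: norm_mult norm_divide nc_def c0'_def)
  also have "\<dots> \<le> (K * (v / r') * F) * (\<epsilon> * v0 / (nc * (nc / 2))) + F * (\<epsilon> * v) / (nc / 2)"
  proof -
    have "M ^ length \<eta> \<le> v / r'" using Mv r' by (simp add: le_divide_eq mult.commute)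
    then have "K * (M ^ length \<eta> * F) \<le> K * ((v / r') * F)" using K Fp by (intro mult_left_mono mult_right_mono) auto
    then have h1: "norm (c \<eta>) \<le> K * (v / r') * F" using cb by (simp add: F_def mult.assoc)
    have h2: "norm (w []) / (nc * norm a0') \<le> \<epsilon> * v0 / (nc * (nc / 2))"
    proof (rule frac_le)
      show "0 \<le> \<epsilon> * v0" using pos by simp
      show "norm (w []) \<le> \<epsilon> * v0" by (rule w0)
      show "0 < nc * (nc / 2)" using ncp by simp
      show "nc * (nc / 2) \<le> nc * norm a0'" using na ncp by (simp add: a0'_def nc_def)
    qed
    have h3: "norm (w \<eta>) / norm a0' \<le> F * (\<epsilon> * v) / (nc / 2)"
    proof (rule frac_le)
      show "0 \<le> F * (\<epsilon> * v)" using pos Fp by simp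
      show "norm (w \<eta>) \<le> F * (\<epsilon> * v)" using wb by (simp add: F_def)
      show "0 < nc / 2" using ncp by simp
      show "nc / 2 \<le> norm a0'" using na by (simp add: a0'_def nc_def)
    qed
    have "norm (c \<eta>) * (norm (w []) / (nc * norm a0')) \<le> (K * (v / r') * F) * (\<epsilon> * v0 / (nc * (nc / 2)))"
      by (rule mult_mono[OF h1 h2]) (use K r' pos Fp ncp in auto)
    then show ?thesis using h3 by linarith
  qed
  also have "\<dots> = F * (\<epsilon> * (2 * v0 * K / (nc ^ 2 * r') + 2 / nc) * v)"
    using ncp r' by (simp add: field_simps power2_eq_square)
  finally show ?thesis by (simp add: F_def nc_def)
qed


lemma inv_cont_core:
  fixes c :: "'a list \<Rightarrow> 'k::real_normed_field"
  assumes cu: "c \<in> LC_units" and U: "silva_zero_nbhd U"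
  shows "\<exists>W. silva_zero_nbhd W \<and> (\<forall>w\<in>W. (\<lambda>\<eta>. c \<eta> + w \<eta>) \<in> LC_units \<and>
            (\<lambda>\<eta>. shuffle_inv (\<lambda>\<eta>. c \<eta> + w \<eta>) \<eta> - shuffle_inv c \<eta>) \<in> U)"
proof -
  obtain e where we: "wseq e" and Ucrit:
    "\<And>x. x \<in> LC \<Longrightarrow> (\<And>\<eta>. norm (x \<eta>) \<le> fact (length \<eta>) * Vw e (length \<eta>)) \<Longrightarrow> x \<in> U"
    using zero_nbhd_weight[OF U] by blast
  interpret wseq e by (rule we)
  define V where "V = Vw e"
  define C0 where "C0 = 8 * e 1"
  have C0: "C0 > 0" using epos[of 1] by (simp add: C0_def)
  have Vp: "\<And>n. 0 < V n" by (simp add: V_def Vw_pos)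
  obtain M K where M: "M > 0" and K: "K > 0" and cb: "\<And>\<eta>. norm (c \<eta>) \<le> K * (M ^ length \<eta> * fact (length \<eta>))"
    and mj: "maj (cprime c) (Aser (K / norm (c [])) M)" by (rule unit_data[OF cu]) blast
  have cL: "c \<in> LC" and c0: "c [] \<noteq> 0" using cu by (auto simp: LC_units_def)
  define nc where "nc = norm (c [])"
  have ncp: "nc > 0" using c0 by (simp add: nc_def)
  define \<kappa> where "\<kappa> = K / nc"
  have kp: "\<kappa> > 0" using K ncp by (simp add: \<kappa>_def)
  define A where "A = Aser \<kappa> M"
  define B where "B = M * (1 + \<kappa>)"
  define G where "G = Gser B"
  have Bp: "B > 0" using M kp by (simp add: B_def)
  have mjA: "maj (cprime c) A" using mj by (simp add: A_def \<kappa>_def nc_def)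
  have fA: "fnn A" using kp M by (simp add: A_def Aser_fnn)
  have HG: "fle (Hs A N) G" for N unfolding A_def G_def B_def by (rule Hs_le_G[OF kp M])
  have fH: "fnn (Hs A N)" for N by (rule Hs_fnn[OF fA])
  have fG: "fnn G" using Bp by (simp add: G_def Gser_fnn)
  obtain r where r: "r > 0" "\<And>n. r * B ^ n \<le> V n" using Vw_super[OF Bp] by (auto simp: V_def)
  obtain r' where r': "r' > 0" "\<And>n. r' * M ^ n \<le> V n" using Vw_super[OF M] by (auto simp: V_def)
  define V0 where "V0 = V 0"
  have V0: "V0 > 0" by (simp add: V0_def Vp)
  have GV: "fle G (fps_const (1 / r) * VF)"
    unfolding fle_def G_def Gser_def VF_nth fps_mult_left_const_nth
    using r by (simp add: field_simps V_def mult.commute)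
  define g where "g = 2 * V0 * K / (nc ^ 2 * r') + 2 / nc"
  have gp: "g > 0"
  proof -
    have "0 < 2 * V0 * K / (nc ^ 2 * r')" using V0 K ncp r' by (intro divide_pos_pos mult_pos_pos) auto
    moreover have "0 < 2 / nc" using ncp by simp
    ultimately show ?thesis unfolding g_def by linarith
  qed
  define Q where "Q = 4 * g * C0 ^ 2 / (nc * r ^ 2) + 2 * V0 / (nc ^ 2 * r)"
  have Qp: "Q > 0"
  proof -
    have "0 < 4 * g * C0 ^ 2 / (nc * r ^ 2)" using gp C0 ncp r by (intro divide_pos_pos mult_pos_pos) auto
    moreover have "0 < 2 * V0 / (nc ^ 2 * r)" using V0 ncp r by (intro divide_pos_pos mult_pos_pos) auto
    ultimately show ?thesis unfolding Q_def by linarith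
  qed
  define \<epsilon> where "\<epsilon> = min (nc / (4 * V0)) (min (r / (2 * g * C0 ^ 2)) (1 / Q))"
  have ep: "\<epsilon> > 0" using ncp V0 r gp C0 Qp by (simp add: \<epsilon>_def)
  have le1: "\<epsilon> \<le> nc / (4 * V0)" and le2: "\<epsilon> \<le> r / (2 * g * C0 ^ 2)" and le3: "\<epsilon> \<le> 1 / Q"
    unfolding \<epsilon>_def by auto
  have e1: "\<epsilon> * V0 \<le> nc / 4" using le1 V0 by (simp add: le_divide_eq algebra_simps)
  have "0 < 2 * g * C0 ^ 2" using gp C0 by simp
  then have e2: "\<epsilon> * (2 * g * C0 ^ 2) \<le> r" using le2 by (simp add: le_divide_eq)
  have e3: "\<epsilon> * Q \<le> 1" using le3 Qp by (simp add: le_divide_eq)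
  define W where "W = {w :: 'a list \<Rightarrow> 'k. w \<in> LC \<and> (\<forall>\<eta>. norm (w \<eta>) \<le> fact (length \<eta>) * (\<epsilon> * V (length \<eta>)))}"
  have Wn: "silva_zero_nbhd W" unfolding W_def
  proof (rule weight_nbhd)
    fix L :: real assume "L > 0"
    then obtain r0 where "r0 > 0" "\<And>n. r0 * L ^ n \<le> V n" using Vw_super by (auto simp: V_def)
    then show "\<exists>r>0. \<forall>n. r * L ^ n \<le> \<epsilon> * V n"
      using ep by (intro exI[of _ "\<epsilon> * r0"]) (auto simp: mult.assoc intro: mult_left_mono)
  qed
  define \<Gamma> where "\<Gamma> = fps_const (\<epsilon> * g) * VF"
  define Z where "Z = fps_const (2 / r) * VF"
  have f\<Gamma>: "fnn \<Gamma>" unfolding \<Gamma>_def using ep gp by (intro fnn_scale VF_fnn) auto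
  have fZ: "fnn Z" unfolding Z_def using r by (intro fnn_scale VF_fnn) auto
  have r_le: "r \<le> V0" using r(2)[of 0] by (simp add: V0_def)
  have oneZ: "fle 1 Z" unfolding fle_def Z_def fps_mult_left_const_nth VF_nth
  proof
    fix n show "fps_nth 1 n \<le> 2 / r * Vw e n"
    proof (cases "n = 0")
      case True
      then show ?thesis using r_le r(1) by (simp add: V0_def V_def field_simps)
    next
      case False
      then show ?thesis using r(1) Vp[of n] by (simp add: V_def fps_one_nth)
    qed
  qed
  have GamV: "fle \<Gamma> (fps_const (\<epsilon> * g) * VF)" by (simp add: \<Gamma>_def fle_refl)
  have ZV: "fle Z (fps_const (2 / r) * VF)" by (simp add: Z_def fle_refl)
  have GGam: "fle (G * \<Gamma>) (fps_const (1 / r * (\<epsilon> * g) * (8 * e 1)) * VF)"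
    by (rule VF_prod[OF fG f\<Gamma> GV GamV]) (use r ep gp in auto)
  have fGGam: "fnn (G * \<Gamma>)" by (intro fnn_mult fG f\<Gamma>)
  define \<beta> where "\<beta> = 1 / r * (\<epsilon> * g) * (8 * e 1) * (2 / r) * (8 * e 1)"
  have GGZ: "fle (G * \<Gamma> * Z) (fps_const \<beta> * VF)"
    unfolding \<beta>_def by (rule VF_prod[OF fGGam fZ GGam ZV]) (use r ep gp epos[of 1] in auto)
  have beta_le: "1 / r + \<beta> \<le> 2 / r"
  proof -
    have "\<beta> = (\<epsilon> * (2 * g * C0 ^ 2)) / r ^ 2" by (simp add: \<beta>_def C0_def power2_eq_square field_simps)
    also have "\<dots> \<le> r / r ^ 2" using e2 r by (intro divide_right_mono) auto
    also have "\<dots> = 1 / r" using r by (simp add: power2_eq_square)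
    finally show ?thesis by simp
  qed
  have GZ: "fle (G + G * \<Gamma> * Z) Z"
  proof -
    have "fle (G + G * \<Gamma> * Z) (fps_const (1 / r) * VF + fps_const \<beta> * VF)"
      by (intro fle_add GV GGZ)
    also have "fps_const (1 / r) * VF + fps_const \<beta> * VF = fps_const (1 / r + \<beta>) * VF"
      by (simp add: fps_const_add[symmetric] distrib_right del: fps_const_add)
    finally have "fle (G + G * \<Gamma> * Z) (fps_const (1 / r + \<beta>) * VF)" .
    moreover have "fle (fps_const (1 / r + \<beta>) * VF) Z"
      unfolding Z_def by (intro fle_scale_le beta_le VF_fnn)
    ultimately show ?thesis by (rule fle_trans)
  qed
  have "(\<lambda>\<eta>. c \<eta> + w \<eta>) \<in> LC_units \<and> (\<lambda>\<eta>. shuffle_inv (\<lambda>\<eta>. c \<eta> + w \<eta>) \<eta> - shuffle_inv c \<eta>) \<in> U"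
    if wW: "w \<in> W" for w
  proof -
    have wL: "w \<in> LC" and wb: "\<And>\<eta>. norm (w \<eta>) \<le> fact (length \<eta>) * (\<epsilon> * V (length \<eta>))"
      using wW by (auto simp: W_def)
    define a where "a = (\<lambda>\<eta>. c \<eta> + w \<eta>)"
    have aL: "a \<in> LC" unfolding a_def by (rule LC_add[OF cL wL])
    have w0: "norm (w []) \<le> \<epsilon> * V0" using wb[of "[]"] by (simp add: V0_def)
    have na: "nc / 2 \<le> norm (c [] + w [])"
    proof -
      have "nc \<le> norm (c [] + w []) + norm (w [])"
        unfolding nc_def by (metis add_diff_cancel_right' norm_triangle_ineq4)
      then show ?thesis using w0 e1 ncp by linarith
    qed
    have a0: "a [] \<noteq> 0" using na ncp by (auto simp: a_def)
    have au: "a \<in> LC_units" using aL a0 by (simp add: LC_units_def)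
    have mjG: "maj (\<lambda>\<eta>. cprime a \<eta> - cprime c \<eta>) \<Gamma>"
      unfolding maj_def
    proof
      fix \<eta> :: "'a list"
      have "norm (cprime (\<lambda>\<eta>. c \<eta> + w \<eta>) \<eta> - cprime c \<eta>)
         \<le> fact (length \<eta>) * (\<epsilon> * (2 * V0 * K / (norm (c []) ^ 2 * r') + 2 / norm (c [])) * V (length \<eta>))"
      proof (rule cprime_diff_bound)
        show "c [] + w [] \<noteq> 0" using a0 by (simp add: a_def)
        show "norm (c []) / 2 \<le> norm (c [] + w [])" using na by (simp add: nc_def)
        show "norm (c \<eta>) \<le> K * (M ^ length \<eta> * fact (length \<eta>))" by (rule cb)
        show "r' * M ^ length \<eta> \<le> V (length \<eta>)" by (rule r'(2))
        show "0 < M" by (rule M)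
      qed (use c0 w0 cb r' K wb ep V0 Vp M in \<open>auto simp: less_imp_le\<close>)
      then show "norm (cprime a \<eta> - cprime c \<eta>) \<le> fact (length \<eta>) * fps_nth \<Gamma> (length \<eta>)"
        by (simp add: a_def \<Gamma>_def VF_nth g_def nc_def V_def mult.assoc)
    qed
    define X where "X N = Pser (cprime a) N" for N
    define Y where "Y N = Pser (cprime c) N" for N
    have ind: "maj (\<lambda>\<eta>. X N \<eta> - Y N \<eta>) (Hs A N * \<Gamma> * Z) \<and> maj (X N) Z" for N
    proof (induction N)
      case 0
      have "maj (\<lambda>\<eta>. 0 :: 'k) (Hs A 0 * \<Gamma> * Z)" by (intro maj_zero fnn_mult fH f\<Gamma> fZ)
      moreover have "maj (X 0) Z" unfolding X_def Pser_0 by (rule maj_mono[OF maj_one oneZ])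
      ultimately show ?case by (simp add: X_def Y_def Pser_0)
    next
      case (Suc N)
      have d1: "maj (shuffle (\<lambda>\<eta>. cprime a \<eta> - cprime c \<eta>) (X N)) (\<Gamma> * Z)"
        using mjG Suc by (intro shuffle_maj) auto
      have d2: "maj (shuffle (cprime c) (\<lambda>\<eta>. X N \<eta> - Y N \<eta>)) (A * (Hs A N * \<Gamma> * Z))"
        using mjA Suc by (intro shuffle_maj) auto
      have deq: "(\<lambda>\<eta>. X (Suc N) \<eta> - Y (Suc N) \<eta>)
          = (\<lambda>\<eta>. shuffle (\<lambda>\<eta>. cprime a \<eta> - cprime c \<eta>) (X N) \<eta> + shuffle (cprime c) (\<lambda>\<eta>. X N \<eta> - Y N \<eta>) \<eta>)"
        by (simp add: X_def Y_def Pser_Suc shuffle_diff_left shuffle_diff_right)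
      have feq: "\<Gamma> * Z + A * (Hs A N * \<Gamma> * Z) = Hs A (Suc N) * \<Gamma> * Z"
        by (simp add: Hs_Suc algebra_simps)
      have D: "maj (\<lambda>\<eta>. X (Suc N) \<eta> - Y (Suc N) \<eta>) (Hs A (Suc N) * \<Gamma> * Z)"
        unfolding deq feq[symmetric] by (rule maj_add[OF d1 d2])
      have "maj (\<lambda>\<eta>. Y (Suc N) \<eta> + (X (Suc N) \<eta> - Y (Suc N) \<eta>)) (Hs A (Suc N) + Hs A (Suc N) * \<Gamma> * Z)"
        using maj_add[OF maj_Pser[OF mjA, of "Suc N"] D] by (simp add: Y_def)
      moreover have "fle (Hs A (Suc N) + Hs A (Suc N) * \<Gamma> * Z) (G + G * \<Gamma> * Z)"
        by (intro fle_add fle_mult HG fle_refl fnn_mult fH f\<Gamma> fZ)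
      ultimately have "maj (X (Suc N)) (G + G * \<Gamma> * Z)" using maj_mono by simp
      then have "maj (X (Suc N)) Z" using maj_mono GZ by blast
      then show ?case using D by simp
    qed
    have diffb: "maj (\<lambda>\<eta>. X N \<eta> - Y N \<eta>) (fps_const \<beta> * VF)" for N
    proof -
      have "fle (Hs A N * \<Gamma> * Z) (G * \<Gamma> * Z)" by (intro fle_mult HG fle_refl fnn_mult fH f\<Gamma> fZ)
      then show ?thesis using ind[of N] GGZ maj_mono fle_trans by blast
    qed
    have Yb: "maj (Y N) (fps_const (1 / r) * VF)" for N
      unfolding Y_def using maj_Pser[OF mjA] HG GV maj_mono fle_trans by blast
    have diffU: "(\<lambda>\<eta>. shuffle_inv a \<eta> - shuffle_inv c \<eta>) \<in> U"
    proof (rule Ucrit)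
      show "(\<lambda>\<eta>. shuffle_inv a \<eta> - shuffle_inv c \<eta>) \<in> LC"
        using inv_unit[OF au] inv_unit[OF cu] by (intro LC_diff) (auto simp: LC_units_def)
      fix \<eta> :: "'a list"
      define n where "n = length \<eta>"
      define F where "F = (fact n :: real)"
      have Fp: "F > 0" by (simp add: F_def)
      define a0 where "a0 = a []"
      define c0' where "c0' = c []"
      have a0n: "a0 \<noteq> 0" and c0n: "c0' \<noteq> 0" using a0 c0 by (auto simp: a0_def c0'_def)
      have na': "nc / 2 \<le> norm a0" using na by (simp add: a0_def a_def)
      have eq: "shuffle_inv a \<eta> - shuffle_inv c \<eta> = inverse a0 * (X n \<eta> - Y n \<eta>) - (w [] / (a0 * c0')) * Y n \<eta>"
      proof -
        have "shuffle_inv a \<eta> - shuffle_inv c \<eta> = inverse a0 * X n \<eta> - inverse c0' * Y n \<eta>"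
          by (simp add: shuffle_inv_Pser X_def Y_def a0_def c0'_def n_def)
        also have "\<dots> = inverse a0 * (X n \<eta> - Y n \<eta>) + ((c0' - a0) / (a0 * c0')) * Y n \<eta>"
          using a0n c0n by (simp add: field_simps)
        also have "c0' - a0 = - w []" by (simp add: a0_def c0'_def a_def)
        finally show ?thesis by simp
      qed
      have b1: "norm (X n \<eta> - Y n \<eta>) \<le> F * (\<beta> * V n)"
        using majD[OF diffb[of n], of \<eta>] by (simp add: F_def n_def VF_nth V_def)
      have b2: "norm (Y n \<eta>) \<le> F * (1 / r * V n)"
        using majD[OF Yb[of n], of \<eta>] by (simp add: F_def n_def VF_nth V_def)
      have "norm (shuffle_inv a \<eta> - shuffle_inv c \<eta>)
          \<le> (1 / norm a0) * norm (X n \<eta> - Y n \<eta>) + (norm (w []) / (norm a0 * nc)) * norm (Y n \<eta>)"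
        unfolding eq by (rule order_trans[OF norm_triangle_ineq4]) (simp add: norm_mult norm_divide norm_inverse nc_def c0'_def divide_inverse)
      also have "\<dots> \<le> (2 / nc) * (F * (\<beta> * V n)) + ((\<epsilon> * V0) / ((nc / 2) * nc)) * (F * (1 / r * V n))"
      proof (rule add_mono)
        have "norm a0 > 0" using a0n by simp
        then have "1 / norm a0 \<le> 2 / nc" using na' ncp by (simp add: field_simps)
        then show "(1 / norm a0) * norm (X n \<eta> - Y n \<eta>) \<le> (2 / nc) * (F * (\<beta> * V n))"
          using b1 ncp by (intro mult_mono) auto
        have "norm (w []) / (norm a0 * nc) \<le> (\<epsilon> * V0) / ((nc / 2) * nc)"
          using w0 na' ncp ep V0 by (intro frac_le mult_right_mono) auto
        then show "(norm (w []) / (norm a0 * nc)) * norm (Y n \<eta>) \<le> ((\<epsilon> * V0) / ((nc / 2) * nc)) * (F * (1 / r * V n))"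
          using b2 ep V0 ncp by (intro mult_mono) auto
      qed
      also have "\<dots> = F * V n * (\<epsilon> * Q)"
        using ncp r C0 by (simp add: \<beta>_def Q_def C0_def power2_eq_square field_simps)
      also have "\<dots> \<le> F * V n * 1" using e3 Fp Vp[of n] by (intro mult_left_mono) auto
      finally show "norm (shuffle_inv a \<eta> - shuffle_inv c \<eta>) \<le> fact (length \<eta>) * Vw e (length \<eta>)"
        by (simp add: F_def n_def V_def)
    qed
    show ?thesis using au diffU by (simp add: a_def)
  qed
  then show ?thesis using Wn by blast
qed




lemma main_generic:
  "(\<forall>c\<in>(LC_units :: ('a list \<Rightarrow> 'k::real_normed_field) set).
       limitin silva_topology (\<lambda>n \<eta>. \<Sum>k<n. shuffle_pow (cprime c) k \<eta>)
               (\<lambda>\<eta>. \<Sum>k\<le>length \<eta>. shuffle_pow (cprime c) k \<eta>) sequentially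
     \<and> shuffle_inv c \<in> LC_units)
   \<and> continuous_map (subtopology silva_topology (LC_units :: ('a list \<Rightarrow> 'k) set))
                     (subtopology silva_topology LC_units) shuffle_inv"
proof (intro conjI ballI)
  fix c :: "'a list \<Rightarrow> 'k" assume "c \<in> LC_units"
  then show "limitin silva_topology (\<lambda>n \<eta>. \<Sum>k<n. shuffle_pow (cprime c) k \<eta>)
               (\<lambda>\<eta>. \<Sum>k\<le>length \<eta>. shuffle_pow (cprime c) k \<eta>) sequentially"
    by (rule partial_limit)
  show "shuffle_inv c \<in> LC_units" using \<open>c \<in> LC_units\<close> by (rule inv_unit)
next
  have uL: "(LC_units :: ('a list \<Rightarrow> 'k) set) \<subseteq> LC" by (auto simp: LC_units_def)
  have ts: "topspace (subtopology silva_topology (LC_units :: ('a list \<Rightarrow> 'k) set)) = LC_units"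
    using uL by (simp add: topspace_subtopology topspace_silva Int_absorb1)
  show "continuous_map (subtopology silva_topology (LC_units :: ('a list \<Rightarrow> 'k) set))
                     (subtopology silva_topology LC_units) shuffle_inv"
    unfolding continuous_map ts
  proof (intro conjI allI impI)
    show "shuffle_inv ` (LC_units :: ('a list \<Rightarrow> 'k) set) \<subseteq> LC_units" using inv_unit by blast
    fix U :: "('a list \<Rightarrow> 'k) set"
    assume "openin (subtopology silva_topology LC_units) U"
    then obtain T where T: "silva_open T" and UT: "U = T \<inter> LC_units"
      unfolding openin_subtopology openin_silva by blast
    define P where "P = {x \<in> (LC_units :: ('a list \<Rightarrow> 'k) set). shuffle_inv x \<in> T}"
    have PU: "{x \<in> LC_units. shuffle_inv x \<in> U} = P"
      unfolding P_def UT using inv_unit by blast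
    have "silva_open P" unfolding silva_open_def
    proof (intro conjI ballI)
      show "P \<subseteq> LC" using uL by (auto simp: P_def)
      fix d assume dP: "d \<in> P"
      then have du: "d \<in> LC_units" and dT: "shuffle_inv d \<in> T" by (auto simp: P_def)
      obtain U0 where U0: "silva_zero_nbhd U0" "(\<lambda>u \<eta>. shuffle_inv d \<eta> + u \<eta>) ` U0 \<subseteq> T"
        using T dT unfolding silva_open_def by blast
      obtain W where W: "silva_zero_nbhd W" and Wp: "\<forall>w\<in>W. (\<lambda>\<eta>. d \<eta> + w \<eta>) \<in> LC_units \<and>
            (\<lambda>\<eta>. shuffle_inv (\<lambda>\<eta>. d \<eta> + w \<eta>) \<eta> - shuffle_inv d \<eta>) \<in> U0"
        using inv_cont_core[OF du U0(1)] by blast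
      have "(\<lambda>u \<eta>. d \<eta> + u \<eta>) ` W \<subseteq> P"
      proof
        fix x assume "x \<in> (\<lambda>u \<eta>. d \<eta> + u \<eta>) ` W"
        then obtain w where w: "w \<in> W" and x: "x = (\<lambda>\<eta>. d \<eta> + w \<eta>)" by blast
        have xu: "x \<in> LC_units" using Wp w x by blast
        have "(\<lambda>\<eta>. shuffle_inv x \<eta> - shuffle_inv d \<eta>) \<in> U0" using Wp w x by blast
        then have "(\<lambda>\<eta>. shuffle_inv d \<eta> + (shuffle_inv x \<eta> - shuffle_inv d \<eta>)) \<in> T" using U0(2) by blast
        then have "shuffle_inv x \<in> T" by simp
        then show "x \<in> P" using xu by (simp add: P_def)
      qed
      then show "\<exists>U. silva_zero_nbhd U \<and> (\<lambda>u \<eta>. d \<eta> + u \<eta>) ` U \<subseteq> P" using W by blast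
    qed
    moreover have "P \<subseteq> LC_units" by (auto simp: P_def)
    ultimately show "openin (subtopology silva_topology LC_units) {x \<in> LC_units. shuffle_inv x \<in> U}"
      unfolding PU openin_subtopology openin_silva by blast
  qed
qed

theorem proposition3p6:
  fixes dummy :: "'a::finite"
  shows
  "(\<forall>c\<in>(LC_units :: ('a list \<Rightarrow> real) set).
       limitin silva_topology (\<lambda>n \<eta>. \<Sum>k<n. shuffle_pow (cprime c) k \<eta>)
               (\<lambda>\<eta>. \<Sum>k\<le>length \<eta>. shuffle_pow (cprime c) k \<eta>) sequentially
     \<and> shuffle_inv c \<in> LC_units)
   \<and> continuous_map (subtopology silva_topology (LC_units :: ('a list \<Rightarrow> real) set))
                     (subtopology silva_topology LC_units) shuffle_inv
   \<and> (\<forall>c\<in>(LC_units :: ('a list \<Rightarrow> complex) set).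
       limitin silva_topology (\<lambda>n \<eta>. \<Sum>k<n. shuffle_pow (cprime c) k \<eta>)
               (\<lambda>\<eta>. \<Sum>k\<le>length \<eta>. shuffle_pow (cprime c) k \<eta>) sequentially
     \<and> shuffle_inv c \<in> LC_units)
   \<and> continuous_map (subtopology silva_topology (LC_units :: ('a list \<Rightarrow> complex) set))
                     (subtopology silva_topology LC_units) shuffle_inv"
  using main_generic[where 'a = 'a and 'k = real] main_generic[where 'a = 'a and 'k = complex] by blast


end
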